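(* Let $\Gamma=(V,E)$ be a graph, $x,y\in V$ and $\tau\in\mathbb{Z}_{\ge1}$. For each eigenvalue $\lambda$ of $P=P(\Gamma)$ let $E_\lambda$ be the orthogonal projection onto the eigenspace of $P$ for $\lambda$. The following are equivalent. (A) Perfect state transfer occurs on $\Gamma$ from $d^*e_x$ to $d^*e_y$ at time $\tau$. (B) There exists $\gamma\in\{\pm1\}$ such that $T_\tau(P)e_x=\gamma e_y$. (C) There exists $\gamma\in\{\pm1\}$ such that: (a) for every $\lambda\in\sigma(P)$, $E_\lambda e_x=\pm E_\lambda e_y$; (b) for every $\lambda\in\Theta_P(e_x)$, if $E_\lambda e_x=\gamma E_\lambda e_y$ then $\lambda=\cos\frac{j}{\tau}\pi$ for some even integer $j$; (c) for every $\lambda\in\Theta_P(e_x)$, if $E_\lambda e_x=-\gamma E_\lambda e_y$ then $\lambda=\cos\frac{j}{\tau}\pi$ for some odd integer $j$. Moreover, if $\Gamma$ is regular, then $\gamma=1$ in both (B) and (C).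
   Context: All graphs are finite and simple. For $\Gamma=(V,E)$ with symmetric arc set $\mathcal{A}$ ($t((x,y))=y$, $(x,y)^{-1}=(y,x)$): boundary matrix $d_{x,a}=\frac{1}{\sqrt{\deg x}}\delta_{x,t(a)}$, shift matrix $R_{a,b}=\delta_{a,b^{-1}}$, time evolution matrix $U=R(2d^*d-I_{\mathcal{A}})$, discriminant $P=dRd^*$. $e_x$ is the standard unit vector. Perfect state transfer from a state $\Phi$ to a distinct state $\Psi$ at time $\tau$ means $U^\tau\Phi=\gamma\Psi$ for some $\gamma\in\mathbb{C}$, $|\gamma|=1$. $T_n$ is the Chebyshev polynomial of the first kind ($T_0=1$, $T_1=x$, $T_n=2xT_{n-1}-T_{n-2}$). $\sigma(P)$ is the set of distinct eigenvalues of $P$ and $\Theta_P(e_x)=\{\lambda\in\sigma(P)\mid E_\lambda e_x\ne0\}$ is the eigenvalue support. *)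

theory Defs
  imports Complex_Main
begin

text \<open>Finite simple graphs: vertex set = the finite type 'a, adjacency relation E
  symmetric and irreflexive. Arc-indexed objects are supported on the arc set.\<close>

definition simple_graph :: "('a::finite \<Rightarrow> 'a \<Rightarrow> bool) \<Rightarrow> bool" where
  "simple_graph E \<longleftrightarrow> (\<forall>u v. E u v \<longrightarrow> E v u) \<and> (\<forall>u. \<not> E u u)"

definition arcs :: "('a \<Rightarrow> 'a \<Rightarrow> bool) \<Rightarrow> ('a \<times> 'a) set" where
  "arcs E = {(u, v). E u v}"

definition deg :: "('a::finite \<Rightarrow> 'a \<Rightarrow> bool) \<Rightarrow> 'a \<Rightarrow> nat" where
  "deg E u = card {v. E u v}"

definition regular :: "('a::finite \<Rightarrow> 'a \<Rightarrow> bool) \<Rightarrow> bool" where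
  "regular E \<longleftrightarrow> (\<exists>k. \<forall>u. deg E u = k)"

definition arc_tgt :: "'a \<times> 'a \<Rightarrow> 'a" where
  "arc_tgt a = snd a"

definition arc_inv :: "'a \<times> 'a \<Rightarrow> 'a \<times> 'a" where
  "arc_inv a = (snd a, fst a)"

text \<open>Boundary matrix d (rows: vertices, columns: arcs).\<close>
definition bd :: "('a::finite \<Rightarrow> 'a \<Rightarrow> bool) \<Rightarrow> 'a \<Rightarrow> 'a \<times> 'a \<Rightarrow> real" where
  "bd E u a = (if a \<in> arcs E \<and> arc_tgt a = u then 1 / sqrt (real (deg E u)) else 0)"

definition shift :: "('a::finite \<Rightarrow> 'a \<Rightarrow> bool) \<Rightarrow> 'a \<times> 'a \<Rightarrow> 'a \<times> 'a \<Rightarrow> real" where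
  "shift E a b = (if a \<in> arcs E \<and> b \<in> arcs E \<and> a = arc_inv b then 1 else 0)"

text \<open>d^* applied to a vertex vector (d is real, so d^* is its transpose).\<close>
definition dstar :: "('a::finite \<Rightarrow> 'a \<Rightarrow> bool) \<Rightarrow> ('a \<Rightarrow> complex) \<Rightarrow> ('a \<times> 'a \<Rightarrow> complex)" where
  "dstar E v a = (\<Sum>u\<in>UNIV. complex_of_real (bd E u a) * v u)"

definition dmul :: "('a::finite \<Rightarrow> 'a \<Rightarrow> bool) \<Rightarrow> ('a \<times> 'a \<Rightarrow> complex) \<Rightarrow> ('a \<Rightarrow> complex)" where
  "dmul E w u = (\<Sum>a\<in>arcs E. complex_of_real (bd E u a) * w a)"

definition evol :: "('a::finite \<Rightarrow> 'a \<Rightarrow> bool) \<Rightarrow> ('a \<times> 'a \<Rightarrow> complex) \<Rightarrow> ('a \<times> 'a \<Rightarrow> complex)" where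
  "evol E w a = (\<Sum>b\<in>arcs E. complex_of_real (shift E a b) * (2 * dstar E (dmul E w) b - w b))"

definition PST :: "('a::finite \<Rightarrow> 'a \<Rightarrow> bool) \<Rightarrow> ('a \<times> 'a \<Rightarrow> complex) \<Rightarrow> ('a \<times> 'a \<Rightarrow> complex) \<Rightarrow> nat \<Rightarrow> bool" where
  "PST E \<Phi> \<Psi> \<tau> \<longleftrightarrow> \<Phi> \<noteq> \<Psi> \<and> (\<exists>\<gamma>::complex. cmod \<gamma> = 1 \<and> (evol E ^^ \<tau>) \<Phi> = (\<lambda>a. \<gamma> * \<Psi> a))"

definition discr :: "('a::finite \<Rightarrow> 'a \<Rightarrow> bool) \<Rightarrow> 'a \<Rightarrow> 'a \<Rightarrow> real" where
  "discr E u v = (\<Sum>a\<in>arcs E. \<Sum>b\<in>arcs E. bd E u a * shift E a b * bd E v b)"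

definition mat_mult :: "('a::finite \<Rightarrow> 'a \<Rightarrow> real) \<Rightarrow> ('a \<Rightarrow> 'a \<Rightarrow> real) \<Rightarrow> 'a \<Rightarrow> 'a \<Rightarrow> real" where
  "mat_mult A B u v = (\<Sum>w\<in>UNIV. A u w * B w v)"

definition mat_vec :: "('a::finite \<Rightarrow> 'a \<Rightarrow> real) \<Rightarrow> ('a \<Rightarrow> real) \<Rightarrow> 'a \<Rightarrow> real" where
  "mat_vec A v u = (\<Sum>w\<in>UNIV. A u w * v w)"

definition id_mat :: "'a \<Rightarrow> 'a \<Rightarrow> real" where
  "id_mat u v = (if u = v then 1 else 0)"

fun cheb_mat :: "nat \<Rightarrow> ('a::finite \<Rightarrow> 'a \<Rightarrow> real) \<Rightarrow> 'a \<Rightarrow> 'a \<Rightarrow> real" where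
  "cheb_mat 0 M = id_mat"
| "cheb_mat (Suc 0) M = M"
| "cheb_mat (Suc (Suc n)) M =
     (\<lambda>u v. 2 * mat_mult M (cheb_mat (Suc n) M) u v - cheb_mat n M u v)"

definition unitv :: "'a \<Rightarrow> 'a \<Rightarrow> 'b::zero_neq_one" where
  "unitv x = (\<lambda>u. if u = x then 1 else 0)"

definition eigenspace :: "('a::finite \<Rightarrow> 'a \<Rightarrow> real) \<Rightarrow> real \<Rightarrow> ('a \<Rightarrow> real) set" where
  "eigenspace M mu = {v. mat_vec M v = (\<lambda>u. mu * v u)}"

text \<open>Set of distinct eigenvalues (P is real symmetric, so all eigenvalues are real).\<close>
definition spectrum :: "('a::finite \<Rightarrow> 'a \<Rightarrow> real) \<Rightarrow> real set" where
  "spectrum M = {mu. \<exists>v. v \<noteq> (\<lambda>_. 0) \<and> v \<in> eigenspace M mu}"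

definition eigproj :: "('a::finite \<Rightarrow> 'a \<Rightarrow> real) \<Rightarrow> real \<Rightarrow> ('a \<Rightarrow> real) \<Rightarrow> ('a \<Rightarrow> real)" where
  "eigproj M mu z = (THE w. w \<in> eigenspace M mu \<and>
       (\<forall>v\<in>eigenspace M mu. (\<Sum>u\<in>UNIV. (z u - w u) * v u) = 0))"

definition eig_support :: "('a::finite \<Rightarrow> 'a \<Rightarrow> real) \<Rightarrow> ('a \<Rightarrow> real) \<Rightarrow> real set" where
  "eig_support M z = {mu\<in>spectrum M. eigproj M mu z \<noteq> (\<lambda>_. 0)}"

definition condB :: "('a::finite \<Rightarrow> 'a \<Rightarrow> bool) \<Rightarrow> 'a \<Rightarrow> 'a \<Rightarrow> nat \<Rightarrow> real \<Rightarrow> bool" where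
  "condB E x y \<tau> \<gamma> \<longleftrightarrow>
     mat_vec (cheb_mat \<tau> (discr E)) (unitv x) = (\<lambda>u. \<gamma> * unitv y u)"

definition condC :: "('a::finite \<Rightarrow> 'a \<Rightarrow> bool) \<Rightarrow> 'a \<Rightarrow> 'a \<Rightarrow> nat \<Rightarrow> real \<Rightarrow> bool" where
  "condC E x y \<tau> \<gamma> \<longleftrightarrow>
     (let P = discr E; Ex = (\<lambda>mu. eigproj P mu (unitv x)); Ey = (\<lambda>mu. eigproj P mu (unitv y)) in
      (\<forall>mu\<in>spectrum P. Ex mu = Ey mu \<or> Ex mu = (\<lambda>u. - Ey mu u)) \<and>
      (\<forall>mu\<in>eig_support P (unitv x). Ex mu = (\<lambda>u. \<gamma> * Ey mu u) \<longrightarrow>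
          (\<exists>j::int. even j \<and> mu = cos (real_of_int j / real \<tau> * pi))) \<and>
      (\<forall>mu\<in>eig_support P (unitv x). Ex mu = (\<lambda>u. - \<gamma> * Ey mu u) \<longrightarrow>
          (\<exists>j::int. odd j \<and> mu = cos (real_of_int j / real \<tau> * pi))))"

end

theory Submission
  imports Defs "HOL-Analysis.Analysis"
begin

lemma eig_mem: "v \<in> eigenspace M mu \<longleftrightarrow> (\<forall>u. mat_vec M v u = mu * v u)"
  by (auto simp: eigenspace_def fun_eq_iff)

lemma mat_vec_add: "mat_vec M (\<lambda>u. f u + g u) = (\<lambda>u. mat_vec M f u + mat_vec M g u)"
  by (simp add: mat_vec_def fun_eq_iff distrib_left sum.distrib)
lemma mat_vec_diff: "mat_vec M (\<lambda>u. f u - g u) = (\<lambda>u. mat_vec M f u - mat_vec M g u)"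
  by (simp add: mat_vec_def fun_eq_iff right_diff_distrib sum_subtractf)
lemma mat_vec_scale: "mat_vec M (\<lambda>u. c * f u) = (\<lambda>u. c * mat_vec M f u)"
  by (simp add: mat_vec_def fun_eq_iff sum_distrib_left algebra_simps)
lemma mat_vec_zero: "mat_vec M (\<lambda>u. 0) = (\<lambda>u. 0)"
  by (simp add: mat_vec_def fun_eq_iff)
lemma mat_vec_mult: "mat_vec (mat_mult A B) f = mat_vec A (mat_vec B f)"
proof -
  have "(\<Sum>w\<in>UNIV. (\<Sum>v\<in>UNIV. A u v * B v w) * f w) = (\<Sum>v\<in>UNIV. A u v * (\<Sum>w\<in>UNIV. B v w * f w))" for u
  proof -
    have "(\<Sum>w\<in>UNIV. (\<Sum>v\<in>UNIV. A u v * B v w) * f w) = (\<Sum>w\<in>UNIV. \<Sum>v\<in>UNIV. A u v * (B v w * f w))"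
      by (simp add: sum_distrib_right mult.assoc)
    also have "\<dots> = (\<Sum>v\<in>UNIV. \<Sum>w\<in>UNIV. A u v * (B v w * f w))" by (rule sum.swap)
    also have "\<dots> = (\<Sum>v\<in>UNIV. A u v * (\<Sum>w\<in>UNIV. B v w * f w))" by (simp add: sum_distrib_left)
    finally show ?thesis .
  qed
  then show ?thesis unfolding mat_vec_def mat_mult_def fun_eq_iff by simp
qed

lemma proj_exists:
  fixes M :: "'a::finite \<Rightarrow> 'a \<Rightarrow> real"
  shows "\<exists>w. w \<in> eigenspace M mu \<and> (\<forall>v\<in>eigenspace M mu. (\<Sum>u\<in>UNIV. (z u - w u) * v u) = 0)"
proof -
  let ?S = "vec_lambda ` eigenspace M mu :: (real^'a) set"
  have sub: "subspace ?S"
    unfolding subspace_def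
  proof (intro conjI ballI allI)
    show "0 \<in> ?S"
      by (rule image_eqI[of _ _ "\<lambda>u. 0"]) (auto simp: eig_mem mat_vec_zero vec_eq_iff)
  next
    fix a b assume "a \<in> ?S" "b \<in> ?S"
    then obtain f g where f: "f \<in> eigenspace M mu" "a = vec_lambda f" and g: "g \<in> eigenspace M mu" "b = vec_lambda g" by auto
    show "a + b \<in> ?S"
    proof (rule image_eqI[of _ _ "\<lambda>u. f u + g u"])
      show "a + b = vec_lambda (\<lambda>u. f u + g u)" using f g by (simp add: vec_eq_iff)
      show "(\<lambda>u. f u + g u) \<in> eigenspace M mu" using f g by (simp add: eig_mem mat_vec_add distrib_left)
    qed
  next
    fix c :: real and a assume "a \<in> ?S"
    then obtain f where f: "f \<in> eigenspace M mu" "a = vec_lambda f" by auto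
    show "c *\<^sub>R a \<in> ?S"
    proof (rule image_eqI[of _ _ "\<lambda>u. c * f u"])
      show "c *\<^sub>R a = vec_lambda (\<lambda>u. c * f u)" using f by (simp add: vec_eq_iff)
      show "(\<lambda>u. c * f u) \<in> eigenspace M mu" using f by (simp add: eig_mem mat_vec_scale mult.left_commute)
    qed
  qed
  then have sp: "span ?S = ?S" by (simp add: span_eq_iff)
  obtain y z' where y: "y \<in> span ?S" and o: "\<And>w. w \<in> span ?S \<Longrightarrow> orthogonal z' w" and e: "vec_lambda z = y + z'"
    using orthogonal_subspace_decomp_exists[of ?S "vec_lambda z"] by metis
  from y sp obtain w where w: "w \<in> eigenspace M mu" "y = vec_lambda w" by auto
  have z': "z' = vec_lambda (\<lambda>u. z u - w u)" using e w by (simp add: vec_eq_iff algebra_simps)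
  show ?thesis
  proof (intro exI conjI ballI)
    show "w \<in> eigenspace M mu" by fact
    fix v assume "v \<in> eigenspace M mu"
    then have "orthogonal z' (vec_lambda v)" using o sp by auto
    then show "(\<Sum>u\<in>UNIV. (z u - w u) * v u) = 0"
      by (simp add: z' orthogonal_def inner_vec_def)
  qed
qed

lemma sumsq_zero:
  fixes f :: "'a::finite \<Rightarrow> real"
  assumes "(\<Sum>u\<in>UNIV. f u * f u) = 0" shows "f = (\<lambda>u. 0)"
proof -
  have "\<forall>u\<in>UNIV. f u * f u = 0" using sum_nonneg_eq_0_iff[of UNIV "\<lambda>u. f u * f u"] assms by simp
  then show ?thesis by (auto simp: fun_eq_iff)
qed

lemma proj_unique:
  fixes M :: "'a::finite \<Rightarrow> 'a \<Rightarrow> real"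
  assumes "w1 \<in> eigenspace M mu" "\<forall>v\<in>eigenspace M mu. (\<Sum>u\<in>UNIV. (z u - w1 u) * v u) = 0"
    "w2 \<in> eigenspace M mu" "\<forall>v\<in>eigenspace M mu. (\<Sum>u\<in>UNIV. (z u - w2 u) * v u) = 0"
  shows "w1 = w2"
proof -
  let ?d = "\<lambda>u. w1 u - w2 u"
  have d: "?d \<in> eigenspace M mu" using assms(1,3) by (auto simp: eig_mem mat_vec_diff algebra_simps)
  have "(\<Sum>u\<in>UNIV. (z u - w2 u) * ?d u) - (\<Sum>u\<in>UNIV. (z u - w1 u) * ?d u) = 0"
    using assms(2,4) d by auto
  moreover have "(\<Sum>u\<in>UNIV. (z u - w2 u) * ?d u) - (\<Sum>u\<in>UNIV. (z u - w1 u) * ?d u) = (\<Sum>u\<in>UNIV. ?d u * ?d u)"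
    unfolding sum_subtractf[symmetric] by (rule sum.cong) (simp_all add: algebra_simps)
  ultimately have "(\<Sum>u\<in>UNIV. ?d u * ?d u) = 0" by simp
  then show ?thesis using sumsq_zero[of ?d] by (auto simp: fun_eq_iff)
qed

lemma eigproj_char:
  "eigproj M mu z \<in> eigenspace M mu \<and> (\<forall>v\<in>eigenspace M mu. (\<Sum>u\<in>UNIV. (z u - eigproj M mu z u) * v u) = 0)"
proof -
  obtain w0 where w0: "w0 \<in> eigenspace M mu" "\<forall>v\<in>eigenspace M mu. (\<Sum>u\<in>UNIV. (z u - w0 u) * v u) = 0"
    using proj_exists by blast
  have "\<exists>!w. w \<in> eigenspace M mu \<and> (\<forall>v\<in>eigenspace M mu. (\<Sum>u\<in>UNIV. (z u - w u) * v u) = 0)"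
  proof (rule ex1I)
    show "w0 \<in> eigenspace M mu \<and> (\<forall>v\<in>eigenspace M mu. (\<Sum>u\<in>UNIV. (z u - w0 u) * v u) = 0)" using w0 by blast
    fix w' assume "w' \<in> eigenspace M mu \<and> (\<forall>v\<in>eigenspace M mu. (\<Sum>u\<in>UNIV. (z u - w' u) * v u) = 0)"
    then show "w' = w0" using proj_unique[of w' M mu z w0] w0 by blast
  qed
  then show ?thesis unfolding eigproj_def by (rule theI')
qed

lemma eigproj_eqI:
  assumes "w \<in> eigenspace M mu" "\<And>v. v \<in> eigenspace M mu \<Longrightarrow> (\<Sum>u\<in>UNIV. (z u - w u) * v u) = 0"
  shows "eigproj M mu z = w"
  using proj_unique[OF eigproj_char[THEN conjunct1] eigproj_char[THEN conjunct2] assms(1)] assms(2) by blast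

lemma quad_zero:
  fixes a K :: real
  assumes "\<And>t. 2*t*a \<le> t^2*K" shows "a = 0"
proof (rule ccontr)
  assume na: "a \<noteq> 0"
  define s where "s = \<bar>K\<bar> + 1"
  have s: "s > 0" "K \<le> s - 1" unfolding s_def by auto
  have h: "2*(a/s)*a \<le> (a/s)^2*K" using assms by blast
  have "2*(a/s)*a * s^2 \<le> (a/s)^2*K * s^2" by (rule mult_right_mono[OF h]) simp
  moreover have "2*(a/s)*a * s^2 = 2*a*a * s" using s by (simp add: power2_eq_square field_simps)
  moreover have "(a/s)^2*K * s^2 = a*a*K" using s by (simp add: power2_eq_square field_simps)
  ultimately have "2*a*a * s \<le> a*a*K" by simp
  also have "\<dots> \<le> a*a*(s-1)" using s by (simp add: mult_left_mono)
  finally have "a*a*(s+1) \<le> 0" by (simp add: algebra_simps)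
  moreover have "a*a*(s+1) > 0" using na s by (auto simp add: zero_less_mult_iff linorder_neq_iff)
  ultimately show False by simp
qed

lemma selfadj_eigvec:
  fixes L :: "'v::euclidean_space \<Rightarrow> 'v"
  assumes lin: "linear L" and sa: "\<And>x y. inner (L x) y = inner x (L y)"
    and W: "subspace W" "w \<in> W" "w \<noteq> 0" and inv: "\<And>x. x \<in> W \<Longrightarrow> L x \<in> W"
  shows "\<exists>v c. v \<in> W \<and> v \<noteq> 0 \<and> L v = c *\<^sub>R v"
proof -
  let ?S = "W \<inter> sphere 0 1"
  have cS: "compact ?S" using closed_subspace[OF W(1)] compact_sphere by (rule closed_Int_compact)
  have "(inverse (norm w)) *\<^sub>R w \<in> ?S" using W by (simp add: subspace_scale)
  then have neS: "?S \<noteq> {}" by blast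
  have bl: "bounded_linear L" using lin by (simp add: linear_conv_bounded_linear)
  have cont: "continuous_on ?S (\<lambda>v. inner (L v) v)"
    by (intro continuous_on_inner linear_continuous_on[OF bl] continuous_on_id)
  obtain v0 where v0: "v0 \<in> ?S" and mx: "\<forall>y\<in>?S. inner (L y) y \<le> inner (L v0) v0"
    using continuous_attains_sup[OF cS neS cont] by blast
  define m where "m = inner (L v0) v0"
  have v0W: "v0 \<in> W" and nv0: "norm v0 = 1" using v0 by auto
  have vv: "inner v0 v0 = 1" using nv0 by (simp add: power2_norm_eq_inner[symmetric])
  have bound: "inner (L y) y \<le> m * inner y y" if "y \<in> W" for y
  proof (cases "y = 0")
    case True then show ?thesis using linear_0[OF lin] by simp
  next
    case False
    define c where "c = inverse (norm y)"
    have "c *\<^sub>R y \<in> ?S" using that False W(1) by (simp add: subspace_scale c_def)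
    then have "inner (L (c *\<^sub>R y)) (c *\<^sub>R y) \<le> m" using mx m_def by blast
    then have "c^2 * inner (L y) y \<le> m" by (simp add: linear_scale[OF lin] power2_eq_square)
    moreover have "c^2 * inner y y = 1" using False
      by (simp add: c_def power2_norm_eq_inner[symmetric] field_simps)
    ultimately have "c^2 * inner (L y) y \<le> m * (c^2 * inner y y)" by simp
    moreover have "c^2 > 0" using False by (simp add: c_def)
    ultimately show ?thesis by (simp add: mult.left_commute)
  qed
  have orth0: "inner (L v0) w = 0" if wW: "w \<in> W" and wo: "inner w v0 = 0" for w
  proof -
    define a where "a = inner (L v0) w"
    define q where "q = inner (L w) w"
    define ww where "ww = inner w w"
    have "2*t*a \<le> t^2*(m*ww - q)" for t
    proof -
      have yW: "v0 + t *\<^sub>R w \<in> W" using v0W wW W(1) by (simp add: subspace_add subspace_scale)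
      have e1: "inner (L (v0 + t *\<^sub>R w)) (v0 + t *\<^sub>R w) = m + 2*t*a + t^2*q"
      proof -
        have "inner (L w) v0 = a" using sa[of w v0] by (simp add: a_def inner_commute)
        then show ?thesis
          by (simp add: linear_add[OF lin] linear_scale[OF lin] inner_add_left inner_add_right
              m_def a_def q_def power2_eq_square algebra_simps)
      qed
      have e2: "inner (v0 + t *\<^sub>R w) (v0 + t *\<^sub>R w) = 1 + t^2*ww"
        using vv wo by (simp add: inner_add_left inner_add_right inner_commute ww_def power2_eq_square)
      from bound[OF yW] e1 e2 have "m + 2*t*a + t^2*q \<le> m * (1 + t^2*ww)" by simp
      then show ?thesis by (simp add: algebra_simps)
    qed
    then show ?thesis using quad_zero a_def by blast
  qed
  define u where "u = L v0 - m *\<^sub>R v0"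
  have uW: "u \<in> W" using inv[OF v0W] v0W W(1) by (simp add: u_def subspace_diff subspace_scale)
  have uo: "inner u v0 = 0" using vv by (simp add: u_def inner_diff_left m_def)
  have "inner (L v0) u = 0" using orth0[OF uW uo] .
  then have "inner u u = 0" using uo by (simp add: u_def inner_diff_left inner_commute)
  then have "u = 0" by simp
  then have "L v0 = m *\<^sub>R v0" by (simp add: u_def)
  moreover have "v0 \<noteq> 0" using nv0 by auto
  ultimately show ?thesis using v0W by blast
qed

definition symm :: "('a::finite \<Rightarrow> 'a \<Rightarrow> real) \<Rightarrow> bool" where
  "symm M \<longleftrightarrow> (\<forall>u v. M u v = M v u)"

lemma sym_mv:
  assumes "symm M"
  shows "(\<Sum>u\<in>UNIV. mat_vec M f u * g u) = (\<Sum>u\<in>UNIV. f u * mat_vec M g u)"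
proof -
  have "(\<Sum>u\<in>UNIV. mat_vec M f u * g u) = (\<Sum>u\<in>UNIV. \<Sum>w\<in>UNIV. M u w * f w * g u)"
    by (simp add: mat_vec_def sum_distrib_right)
  also have "\<dots> = (\<Sum>w\<in>UNIV. \<Sum>u\<in>UNIV. M u w * f w * g u)" by (rule sum.swap)
  also have "\<dots> = (\<Sum>w\<in>UNIV. f w * (\<Sum>u\<in>UNIV. M w u * g u))"
    using assms by (simp add: symm_def sum_distrib_left mult.commute mult.left_commute)
  finally show ?thesis by (simp add: mat_vec_def)
qed

lemma eig_orth:
  assumes "symm M" "f \<in> eigenspace M mu" "g \<in> eigenspace M nu" "mu \<noteq> nu"
  shows "(\<Sum>u\<in>UNIV. f u * g u) = 0"
proof -
  have f: "mat_vec M f = (\<lambda>u. mu * f u)" and g: "mat_vec M g = (\<lambda>u. nu * g u)"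
    using assms(2,3) by (auto simp: eigenspace_def)
  have "mu * (\<Sum>u\<in>UNIV. f u * g u) = (\<Sum>u\<in>UNIV. mat_vec M f u * g u)"
    by (simp add: f sum_distrib_left mult.assoc)
  also have "\<dots> = (\<Sum>u\<in>UNIV. f u * mat_vec M g u)" by (rule sym_mv[OF assms(1)])
  also have "\<dots> = nu * (\<Sum>u\<in>UNIV. f u * g u)"
    by (simp add: g sum_distrib_left mult.left_commute)
  finally have "(mu - nu) * (\<Sum>u\<in>UNIV. f u * g u) = 0" by (simp add: algebra_simps)
  then show ?thesis using assms(4) by simp
qed

lemma vn_vl[simp]: "vec_nth (vec_lambda f) = f"
  by (simp add: fun_eq_iff)

lemma inner_vl: "inner (vec_lambda f :: real^'a::finite) (vec_lambda g) = (\<Sum>u\<in>UNIV. f u * g u)"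
  by (simp add: inner_vec_def)

lemma eig_complete:
  fixes M :: "'a::finite \<Rightarrow> 'a \<Rightarrow> real"
  assumes sym: "symm M" and r: "\<And>mu v. v \<in> eigenspace M mu \<Longrightarrow> (\<Sum>u\<in>UNIV. r u * v u) = 0"
  shows "r = (\<lambda>u. 0)"
proof (rule ccontr)
  assume nr: "r \<noteq> (\<lambda>u. 0)"
  define L where "L = (\<lambda>x::real^'a. vec_lambda (mat_vec M (vec_nth x)))"
  define W where "W = {x::real^'a. \<forall>mu v. v \<in> eigenspace M mu \<longrightarrow> inner x (vec_lambda v) = 0}"
  have vn_add: "vec_nth (x + y) = (\<lambda>u. vec_nth x u + vec_nth y u)" for x y :: "real^'a" by (simp add: fun_eq_iff)
  have vn_scale: "vec_nth (c *\<^sub>R x) = (\<lambda>u. c * vec_nth x u)" for c and x :: "real^'a" by (simp add: fun_eq_iff)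
  have lin: "linear L"
    by (rule linearI) (simp_all add: L_def vn_add vn_scale mat_vec_add mat_vec_scale vec_eq_iff)
  have sa: "inner (L x) y = inner x (L y)" for x y
  proof -
    have "inner (L x) y = (\<Sum>u\<in>UNIV. mat_vec M (vec_nth x) u * vec_nth y u)"
      by (simp add: L_def inner_vec_def)
    also have "\<dots> = (\<Sum>u\<in>UNIV. vec_nth x u * mat_vec M (vec_nth y) u)" by (rule sym_mv[OF sym])
    also have "\<dots> = inner x (L y)" by (simp add: L_def inner_vec_def)
    finally show ?thesis .
  qed
  have sub: "subspace W"
    unfolding subspace_def W_def by (simp add: inner_add_left)
  have rW: "vec_lambda r \<in> W" using r by (simp add: W_def inner_vl)
  have rnz: "vec_lambda r \<noteq> (0::real^'a)"
  proof
    assume "vec_lambda r = (0::real^'a)"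
    then have "r = (\<lambda>u. 0)" by (simp add: vec_eq_iff fun_eq_iff)
    with nr show False by simp
  qed
  have inv: "L x \<in> W" if "x \<in> W" for x
  proof -
    have "inner (L x) (vec_lambda v) = 0" if v: "v \<in> eigenspace M mu" for mu v
    proof -
      have mv: "mat_vec M v = (\<lambda>u. mu * v u)" using v by (simp add: eigenspace_def)
      have "inner (L x) (vec_lambda v) = inner x (L (vec_lambda v))" by (rule sa)
      also have "L (vec_lambda v) = mu *\<^sub>R vec_lambda v" by (simp add: L_def mv vec_eq_iff)
      also have "inner x (mu *\<^sub>R vec_lambda v) = 0" using \<open>x \<in> W\<close> v by (simp add: W_def)
      finally show ?thesis .
    qed
    then show ?thesis by (simp add: W_def)
  qed
  obtain v c where v: "v \<in> W" "v \<noteq> 0" "L v = c *\<^sub>R v"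
    using selfadj_eigvec[OF lin sa sub rW rnz inv] by blast
  have "vec_nth v \<in> eigenspace M c"
  proof -
    have "mat_vec M (vec_nth v) u = c * vec_nth v u" for u
      using arg_cong[OF v(3), of "\<lambda>y. vec_nth y u"] by (simp add: L_def)
    then show ?thesis by (simp add: eigenspace_def fun_eq_iff)
  qed
  then have "inner v (vec_lambda (vec_nth v)) = 0" using v(1) unfolding W_def by blast
  then have "inner v v = 0" by (simp add: vec_lambda_eta)
  then show False using v(2) by simp
qed

lemma eig_nonzero_ex: "mu \<in> spectrum M \<Longrightarrow> \<exists>v. v \<noteq> (\<lambda>_. 0) \<and> v \<in> eigenspace M mu"
  by (simp add: spectrum_def)

lemma spectrum_finite:
  fixes M :: "'a::finite \<Rightarrow> 'a \<Rightarrow> real"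
  assumes sym: "symm M"
  shows "finite (spectrum M)"
proof -
  define ev where "ev = (\<lambda>mu. SOME v. v \<noteq> (\<lambda>_. 0) \<and> v \<in> eigenspace M mu)"
  have ev: "ev mu \<noteq> (\<lambda>_. 0) \<and> ev mu \<in> eigenspace M mu" if "mu \<in> spectrum M" for mu
  proof -
    have "\<exists>v. v \<noteq> (\<lambda>_. 0) \<and> v \<in> eigenspace M mu" using that by (simp add: spectrum_def)
    then show ?thesis unfolding ev_def by (rule someI_ex)
  qed
  define g where "g = (\<lambda>mu. vec_lambda (ev mu) :: real^'a)"
  have inj: "inj_on g (spectrum M)"
  proof (rule inj_onI)
    fix mu nu assume mu: "mu \<in> spectrum M" and nu: "nu \<in> spectrum M" and e: "g mu = g nu"
    have evq: "ev mu = ev nu" using e by (simp add: g_def vec_eq_iff fun_eq_iff)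
    obtain u where u: "ev mu u \<noteq> 0" using ev[OF mu] by auto
    have "mat_vec M (ev mu) u = mu * ev mu u" using ev[OF mu] by (simp add: eigenspace_def)
    moreover have "mat_vec M (ev mu) u = nu * ev mu u" using ev[OF nu] evq by (simp add: eigenspace_def)
    ultimately show "mu = nu" using u by simp
  qed
  have po: "pairwise orthogonal (g ` spectrum M)"
  proof (rule pairwiseI)
    fix x y assume x: "x \<in> g ` spectrum M" and y: "y \<in> g ` spectrum M" and xy: "x \<noteq> y"
    from x obtain mu where mu: "mu \<in> spectrum M" "x = g mu" by auto
    from y obtain nu where nu: "nu \<in> spectrum M" "y = g nu" by auto
    have "mu \<noteq> nu" using xy mu nu by auto
    then have "(\<Sum>u\<in>UNIV. ev mu u * ev nu u) = 0"
      using eig_orth[OF sym] ev[OF mu(1)] ev[OF nu(1)] by blast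
    then show "orthogonal x y" using mu nu by (simp add: orthogonal_def g_def inner_vl)
  qed
  have z: "0 \<notin> g ` spectrum M"
  proof
    assume "0 \<in> g ` spectrum M"
    then obtain mu where mu: "mu \<in> spectrum M" "g mu = 0" by auto
    then have "ev mu = (\<lambda>_. 0)" by (simp add: g_def vec_eq_iff fun_eq_iff)
    with ev[OF mu(1)] show False by simp
  qed
  have "finite (g ` spectrum M)"
    using independent_bound[OF pairwise_orthogonal_independent[OF po z]] by simp
  then show ?thesis using finite_imageD[OF _ inj] by blast
qed

lemma eigproj_in: "eigproj M mu z \<in> eigenspace M mu"
  using eigproj_char by blast
lemma eigproj_orth: "v \<in> eigenspace M mu \<Longrightarrow> (\<Sum>u\<in>UNIV. (z u - eigproj M mu z u) * v u) = 0"
  using eigproj_char by blast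

lemma eigproj_inner: "v \<in> eigenspace M mu \<Longrightarrow> (\<Sum>u\<in>UNIV. eigproj M mu z u * v u) = (\<Sum>u\<in>UNIV. z u * v u)"
  using eigproj_orth[of v M mu z] by (simp add: left_diff_distrib sum_subtractf)

lemma eigproj_notspec:
  assumes "mu \<notin> spectrum M" shows "eigproj M mu z = (\<lambda>_. 0)"
  using eigproj_in[of M mu z] assms by (auto simp: spectrum_def)

lemma eig_decomp:
  fixes M :: "'a::finite \<Rightarrow> 'a \<Rightarrow> real"
  assumes sym: "symm M"
  shows "z = (\<lambda>u. \<Sum>mu\<in>spectrum M. eigproj M mu z u)"
proof -
  define r where "r = (\<lambda>u. z u - (\<Sum>mu\<in>spectrum M. eigproj M mu z u))"
  have fin: "finite (spectrum M)" by (rule spectrum_finite[OF sym])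
  have "r = (\<lambda>u. 0)"
  proof (rule eig_complete[OF sym])
    fix nu v assume v: "v \<in> eigenspace M nu"
    show "(\<Sum>u\<in>UNIV. r u * v u) = 0"
    proof (cases "nu \<in> spectrum M")
      case False
      then have "v = (\<lambda>_. 0)" using v by (auto simp: spectrum_def)
      then show ?thesis by simp
    next
      case True
      have "(\<Sum>u\<in>UNIV. r u * v u) = (\<Sum>u\<in>UNIV. z u * v u) - (\<Sum>mu\<in>spectrum M. \<Sum>u\<in>UNIV. eigproj M mu z u * v u)"
        by (simp add: r_def left_diff_distrib sum_subtractf sum_distrib_right sum.swap[of _ "spectrum M"])
      also have "(\<Sum>mu\<in>spectrum M. \<Sum>u\<in>UNIV. eigproj M mu z u * v u)
          = (\<Sum>mu\<in>spectrum M. if mu = nu then (\<Sum>u\<in>UNIV. z u * v u) else 0)"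
      proof (rule sum.cong[OF refl])
        fix mu assume "mu \<in> spectrum M"
        show "(\<Sum>u\<in>UNIV. eigproj M mu z u * v u) = (if mu = nu then (\<Sum>u\<in>UNIV. z u * v u) else 0)"
        proof (cases "mu = nu")
          case True then show ?thesis using eigproj_inner[OF v] by simp
        next
          case False then show ?thesis using eig_orth[OF sym eigproj_in v] by simp
        qed
      qed
      also have "\<dots> = (\<Sum>u\<in>UNIV. z u * v u)" using True fin by simp
      finally show ?thesis by simp
    qed
  qed
  then show ?thesis by (auto simp: r_def fun_eq_iff)
qed

lemma eig_comb: "f \<in> eigenspace M mu \<Longrightarrow> g \<in> eigenspace M mu \<Longrightarrow> (\<lambda>u. a * f u + b * g u) \<in> eigenspace M mu"
  by (simp add: eig_mem mat_vec_add mat_vec_scale algebra_simps)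

lemma eigproj_comb:
  "eigproj M mu (\<lambda>u. a * f u + b * g u) = (\<lambda>u. a * eigproj M mu f u + b * eigproj M mu g u)"
proof (rule eigproj_eqI)
  show "(\<lambda>u. a * eigproj M mu f u + b * eigproj M mu g u) \<in> eigenspace M mu"
    by (intro eig_comb eigproj_in)
  fix v assume v: "v \<in> eigenspace M mu"
  have "(\<Sum>u\<in>UNIV. (a * f u + b * g u - (a * eigproj M mu f u + b * eigproj M mu g u)) * v u)
     = a * (\<Sum>u\<in>UNIV. (f u - eigproj M mu f u) * v u) + b * (\<Sum>u\<in>UNIV. (g u - eigproj M mu g u) * v u)"
    by (simp add: sum_distrib_left sum.distrib[symmetric] algebra_simps)
  also have "\<dots> = 0" using eigproj_orth[OF v] by simp
  finally show "(\<Sum>u\<in>UNIV. (a * f u + b * g u - (a * eigproj M mu f u + b * eigproj M mu g u)) * v u) = 0" .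
qed

lemma eigproj_scale: "eigproj M mu (\<lambda>u. a * f u) = (\<lambda>u. a * eigproj M mu f u)"
  using eigproj_comb[of M mu a f 0 f] by simp

lemma eigproj_diff2: "eigproj M mu (\<lambda>u. 2 * f u - g u) = (\<lambda>u. 2 * eigproj M mu f u - eigproj M mu g u)"
  using eigproj_comb[of M mu 2 f "-1" g] by simp

lemma eigproj_M:
  assumes sym: "symm M"
  shows "eigproj M mu (mat_vec M z) = (\<lambda>u. mu * eigproj M mu z u)"
proof (rule eigproj_eqI)
  show "(\<lambda>u. mu * eigproj M mu z u) \<in> eigenspace M mu"
  proof -
    have "(\<lambda>u. mu * eigproj M mu z u + 0 * eigproj M mu z u) \<in> eigenspace M mu"
      by (rule eig_comb[OF eigproj_in eigproj_in])
    then show ?thesis by simp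
  qed
  fix v assume v: "v \<in> eigenspace M mu"
  have mv: "mat_vec M v = (\<lambda>u. mu * v u)" using v by (simp add: eigenspace_def)
  have "(\<Sum>u\<in>UNIV. (mat_vec M z u - mu * eigproj M mu z u) * v u)
      = (\<Sum>u\<in>UNIV. mat_vec M z u * v u) - mu * (\<Sum>u\<in>UNIV. eigproj M mu z u * v u)"
    by (simp add: left_diff_distrib sum_subtractf sum_distrib_left mult.assoc)
  also have "(\<Sum>u\<in>UNIV. mat_vec M z u * v u) = mu * (\<Sum>u\<in>UNIV. z u * v u)"
    by (simp add: sym_mv[OF sym] mv sum_distrib_left mult.left_commute)
  also have "(\<Sum>u\<in>UNIV. eigproj M mu z u * v u) = (\<Sum>u\<in>UNIV. z u * v u)" by (rule eigproj_inner[OF v])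
  finally show "(\<Sum>u\<in>UNIV. (mat_vec M z u - mu * eigproj M mu z u) * v u) = 0" by simp
qed

fun chb :: "nat \<Rightarrow> real \<Rightarrow> real" where
  "chb 0 t = 1"
| "chb (Suc 0) t = t"
| "chb (Suc (Suc n)) t = 2 * t * chb (Suc n) t - chb n t"

lemma mat_vec_id: "mat_vec id_mat z = z"
proof -
  have "(\<Sum>w\<in>UNIV. (if u = w then 1 else 0) * z w) = (\<Sum>w\<in>UNIV. if u = w then z w else 0)" for u
    by (rule sum.cong) auto
  then show ?thesis by (simp add: mat_vec_def id_mat_def fun_eq_iff)
qed

lemma mat_vec_cheb_SS:
  "mat_vec (cheb_mat (Suc (Suc n)) M) z = (\<lambda>u. 2 * mat_vec M (mat_vec (cheb_mat (Suc n) M) z) u - mat_vec (cheb_mat n M) z u)"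
proof -
  have "mat_vec (cheb_mat (Suc (Suc n)) M) z = (\<lambda>u. 2 * mat_vec (mat_mult M (cheb_mat (Suc n) M)) z u - mat_vec (cheb_mat n M) z u)"
    by (simp add: mat_vec_def fun_eq_iff left_diff_distrib sum_subtractf sum_distrib_left mult.assoc)
  then show ?thesis by (simp add: mat_vec_mult)
qed

lemma eigproj_cheb:
  assumes sym: "symm M"
  shows "eigproj M mu (mat_vec (cheb_mat n M) z) = (\<lambda>u. chb n mu * eigproj M mu z u)"
proof (induction n mu rule: chb.induct)
  case (1 t) then show ?case by (simp add: mat_vec_id)
next
  case (2 t) then show ?case by (simp add: eigproj_M[OF sym])
next
  case (3 n t)
  show ?case
    by (simp del: cheb_mat.simps add: mat_vec_cheb_SS eigproj_diff2 eigproj_M[OF sym] 3 algebra_simps)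
qed

lemma chb_cos: "chb n (cos t) = cos (real n * t)"
proof (induction n rule: nat_less_induct)
  case (1 n)
  show ?case
  proof (cases n)
    case 0 then show ?thesis by simp
  next
    case (Suc m) note m = this
    show ?thesis
    proof (cases m)
      case 0 then show ?thesis using m by simp
    next
      case (Suc k)
      have ih1: "chb (Suc k) (cos t) = cos (real (Suc k) * t)" using 1 m Suc by simp
      have ih0: "chb k (cos t) = cos (real k * t)" using 1 m Suc by simp
      define a where "a = real (Suc k) * t"
      have e1: "real (Suc (Suc k)) * t = a + t" by (simp add: a_def algebra_simps)
      have e0: "real k * t = a - t" by (simp add: a_def algebra_simps)
      have "cos (a + t) = 2 * cos t * cos a - cos (a - t)"
        by (simp add: cos_add cos_diff)
      then show ?thesis using m Suc ih1 ih0 e1 e0 by (simp add: a_def)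
    qed
  qed
qed

lemma chb_bound:
  assumes "-1 \<le> mu" "mu \<le> 1" shows "(chb n mu)^2 \<le> 1"
proof -
  have "mu = cos (arccos mu)" using assms by simp
  then have "chb n mu = cos (real n * arccos mu)" using chb_cos by metis
  then show ?thesis by (simp add: abs_le_square_iff[symmetric] abs_square_le_1)
qed

lemma cos_eq_m1: "cos x = -1 \<Longrightarrow> \<exists>n::int. x = real_of_int (2 * n + 1) * pi"
proof -
  assume c: "cos x = -1"
  have "cos (x - pi) = 1" using c by (simp add: cos_diff)
  then have "\<exists>n::int. x - pi = n * 2 * pi" using cos_one_2pi_int by blast
  then obtain n where "x - pi = real_of_int n * 2 * pi" by blast
  then have "x = real_of_int (2 * n + 1) * pi" by (simp add: algebra_simps)
  then show ?thesis by blast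
qed

lemma parseval:
  assumes sym: "symm M"
  shows "(\<Sum>u\<in>UNIV. z u * z u) = (\<Sum>mu\<in>spectrum M. \<Sum>u\<in>UNIV. eigproj M mu z u * eigproj M mu z u)"
proof -
  have "(\<Sum>u\<in>UNIV. z u * z u) = (\<Sum>u\<in>UNIV. z u * (\<Sum>mu\<in>spectrum M. eigproj M mu z u))"
    by (subst (2) eig_decomp[OF sym, of z]) simp
  also have "\<dots> = (\<Sum>mu\<in>spectrum M. \<Sum>u\<in>UNIV. z u * eigproj M mu z u)"
    by (simp add: sum_distrib_left sum.swap[of _ "spectrum M"])
  also have "\<dots> = (\<Sum>mu\<in>spectrum M. \<Sum>u\<in>UNIV. eigproj M mu z u * eigproj M mu z u)"
    by (rule sum.cong[OF refl]) (simp add: eigproj_inner[OF eigproj_in])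
  finally show ?thesis .
qed

definition condBg :: "('a::finite \<Rightarrow> 'a \<Rightarrow> real) \<Rightarrow> 'a \<Rightarrow> 'a \<Rightarrow> nat \<Rightarrow> real \<Rightarrow> bool" where
  "condBg P x y \<tau> \<gamma> \<longleftrightarrow> mat_vec (cheb_mat \<tau> P) (unitv x) = (\<lambda>u. \<gamma> * unitv y u)"

definition condCg :: "('a::finite \<Rightarrow> 'a \<Rightarrow> real) \<Rightarrow> 'a \<Rightarrow> 'a \<Rightarrow> nat \<Rightarrow> real \<Rightarrow> bool" where
  "condCg P x y \<tau> \<gamma> \<longleftrightarrow>
     (let Ex = (\<lambda>mu. eigproj P mu (unitv x)); Ey = (\<lambda>mu. eigproj P mu (unitv y)) in
      (\<forall>mu\<in>spectrum P. Ex mu = Ey mu \<or> Ex mu = (\<lambda>u. - Ey mu u)) \<and>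
      (\<forall>mu\<in>eig_support P (unitv x). Ex mu = (\<lambda>u. \<gamma> * Ey mu u) \<longrightarrow>
          (\<exists>j::int. even j \<and> mu = cos (real_of_int j / real \<tau> * pi))) \<and>
      (\<forall>mu\<in>eig_support P (unitv x). Ex mu = (\<lambda>u. - \<gamma> * Ey mu u) \<longrightarrow>
          (\<exists>j::int. odd j \<and> mu = cos (real_of_int j / real \<tau> * pi))))"

lemma condB_g: "condB E x y \<tau> \<gamma> = condBg (discr E) x y \<tau> \<gamma>"
  by (simp add: condB_def condBg_def)
lemma condC_g: "condC E x y \<tau> \<gamma> = condCg (discr E) x y \<tau> \<gamma>"
  unfolding condC_def condCg_def Let_def by (rule refl)

lemma unitv_sq: fixes x :: "'a::finite" shows "(\<Sum>u\<in>UNIV. (unitv x u :: real) * unitv x u) = 1"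
proof -
  have "(\<Sum>u\<in>UNIV. (unitv x u :: real) * unitv x u) = (\<Sum>u\<in>UNIV. if u = x then 1 else 0)"
    by (rule sum.cong) (auto simp: unitv_def)
  also have "\<dots> = (if x \<in> UNIV then 1 else 0)" by (rule sum.delta) simp
  finally show ?thesis by simp
qed

lemma chb_arccos:
  assumes "-1 \<le> mu" "mu \<le> 1" shows "chb n mu = cos (real n * arccos mu)"
proof -
  have "mu = cos (arccos mu)" using assms by simp
  then show ?thesis using chb_cos by metis
qed

lemma B_imp_C:
  fixes M :: "'a::finite \<Rightarrow> 'a \<Rightarrow> real"
  assumes sym: "symm M" and bnd: "\<And>mu. mu \<in> spectrum M \<Longrightarrow> -1 \<le> mu \<and> mu \<le> 1"
    and g: "\<gamma> = 1 \<or> \<gamma> = -1" and tau: "\<tau> \<ge> 1" and B: "condBg M x y \<tau> \<gamma>"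
  shows "condCg M x y \<tau> \<gamma>"
proof -
  define E where "E = (\<lambda>mu. eigproj M mu (unitv x))"
  define F where "F = (\<lambda>mu. eigproj M mu (unitv y))"
  have gg: "\<gamma> * \<gamma> = 1" using g by auto
  have key: "F mu u = \<gamma> * chb \<tau> mu * E mu u" for mu u
  proof -
    have "eigproj M mu (mat_vec (cheb_mat \<tau> M) (unitv x)) = eigproj M mu (\<lambda>u. \<gamma> * unitv y u)"
      using B by (simp add: condBg_def)
    then have "(\<lambda>u. chb \<tau> mu * E mu u) = (\<lambda>u. \<gamma> * F mu u)"
      by (simp add: eigproj_cheb[OF sym] eigproj_scale E_def F_def)
    from fun_cong[OF this, of u] have "chb \<tau> mu * E mu u = \<gamma> * F mu u" by simp
    then have "\<gamma> * (chb \<tau> mu * E mu u) = \<gamma> * \<gamma> * F mu u" by simp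
    then show ?thesis using gg by simp
  qed
  define nE where "nE = (\<lambda>mu. \<Sum>u\<in>UNIV. E mu u * E mu u)"
  have fin: "finite (spectrum M)" by (rule spectrum_finite[OF sym])
  have p1: "(\<Sum>mu\<in>spectrum M. nE mu) = 1"
    using parseval[OF sym, of "unitv x"] unitv_sq[of x] by (simp add: nE_def E_def)
  have "(\<Sum>mu\<in>spectrum M. \<Sum>u\<in>UNIV. F mu u * F mu u) = 1"
    using parseval[OF sym, of "unitv y"] unitv_sq[of y] by (simp add: F_def)
  moreover have "(\<Sum>u\<in>UNIV. F mu u * F mu u) = (chb \<tau> mu)^2 * nE mu" for mu
  proof -
    have "(\<Sum>u\<in>UNIV. F mu u * F mu u) = (\<Sum>u\<in>UNIV. (\<gamma> * \<gamma>) * (chb \<tau> mu)^2 * (E mu u * E mu u))"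
      by (simp add: key power2_eq_square algebra_simps)
    then show ?thesis using gg by (simp add: nE_def sum_distrib_left)
  qed
  ultimately have p2: "(\<Sum>mu\<in>spectrum M. (chb \<tau> mu)^2 * nE mu) = 1" by simp
  have "(\<Sum>mu\<in>spectrum M. (1 - (chb \<tau> mu)^2) * nE mu) = (\<Sum>mu\<in>spectrum M. nE mu) - (\<Sum>mu\<in>spectrum M. (chb \<tau> mu)^2 * nE mu)"
    by (simp add: left_diff_distrib sum_subtractf)
  then have "(\<Sum>mu\<in>spectrum M. (1 - (chb \<tau> mu)^2) * nE mu) = 0"
    using p1 p2 by simp
  moreover have ge: "(1 - (chb \<tau> mu)^2) * nE mu \<ge> 0" if "mu \<in> spectrum M" for mu
  proof -
    have "-1 \<le> mu \<and> mu \<le> 1" using that by (rule bnd)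
    then have "(chb \<tau> mu)^2 \<le> 1" using chb_bound[of mu \<tau>] by auto
    moreover have "nE mu \<ge> 0" by (simp add: nE_def sum_nonneg)
    ultimately show "(1 - (chb \<tau> mu)^2) * nE mu \<ge> 0" by simp
  qed
  ultimately have z: "\<forall>mu\<in>spectrum M. (1 - (chb \<tau> mu)^2) * nE mu = 0"
    using sum_nonneg_eq_0_iff[OF fin ge] by simp
  have supp: "chb \<tau> mu = 1 \<or> chb \<tau> mu = -1" if "mu \<in> spectrum M" "E mu \<noteq> (\<lambda>_. 0)" for mu
  proof -
    have "nE mu \<noteq> 0"
    proof
      assume "nE mu = 0"
      then have "E mu = (\<lambda>_. 0)" using sumsq_zero[of "E mu"] by (simp add: nE_def)
      with that(2) show False by simp
    qed
    moreover have "(1 - (chb \<tau> mu)^2) * nE mu = 0" using z that(1) by blast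
    ultimately have "(chb \<tau> mu)^2 = 1" by simp
    then show ?thesis by (simp add: power2_eq_1_iff)
  qed
  have nzu: "\<exists>u. E mu u \<noteq> 0" if "E mu \<noteq> (\<lambda>_. 0)" for mu using that by auto
  have tpos: "real \<tau> > 0" using tau by simp
  have A: "E mu = F mu \<or> E mu = (\<lambda>u. - F mu u)" if mu: "mu \<in> spectrum M" for mu
  proof (cases "E mu = (\<lambda>_. 0)")
    case True
    then have "F mu = (\<lambda>_. 0)" by (auto simp: fun_eq_iff key)
    then show ?thesis using True by simp
  next
    case False
    then have c: "chb \<tau> mu = 1 \<or> chb \<tau> mu = -1" using supp mu by blast
    have kf: "F mu = (\<lambda>u. \<gamma> * chb \<tau> mu * E mu u)" using key by (simp add: fun_eq_iff)
    from c g have "\<gamma> * chb \<tau> mu = 1 \<or> \<gamma> * chb \<tau> mu = -1" by auto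
    then show ?thesis
    proof
      assume "\<gamma> * chb \<tau> mu = 1"
      then have "F mu = E mu" by (simp add: kf)
      then show ?thesis by simp
    next
      assume "\<gamma> * chb \<tau> mu = -1"
      then have "F mu = (\<lambda>u. - E mu u)" by (simp add: kf)
      then show ?thesis by (simp add: fun_eq_iff)
    qed
  qed
  have Bc: "\<exists>j::int. even j \<and> mu = cos (real_of_int j / real \<tau> * pi)"
    if mu: "mu \<in> eig_support M (unitv x)" and e: "E mu = (\<lambda>u. \<gamma> * F mu u)" for mu
  proof -
    have ms: "mu \<in> spectrum M" and ne: "E mu \<noteq> (\<lambda>_. 0)" using mu by (auto simp: eig_support_def E_def)
    obtain u where u: "E mu u \<noteq> 0" using nzu[OF ne] by blast
    have "E mu u = \<gamma> * F mu u" using fun_cong[OF e, of u] by simp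
    also have "F mu u = \<gamma> * chb \<tau> mu * E mu u" by (rule key)
    finally have "E mu u = \<gamma> * (\<gamma> * chb \<tau> mu * E mu u)" .
    then have "E mu u = chb \<tau> mu * E mu u" using gg by (simp add: mult.assoc[symmetric])
    then have c1: "chb \<tau> mu = 1" using u by simp
    have r: "-1 \<le> mu" "mu \<le> 1" using bnd[OF ms] by auto
    have "cos (real \<tau> * arccos mu) = 1" using c1 chb_arccos[OF r] by simp
    then obtain n :: int where n: "real \<tau> * arccos mu = real_of_int n * 2 * pi"
      using cos_one_2pi_int by blast
    have ac: "arccos mu = real_of_int (2 * n) / real \<tau> * pi" using n tpos by (simp add: field_simps)
    have "mu = cos (arccos mu)" using r by simp
    then have "mu = cos (real_of_int (2 * n) / real \<tau> * pi)" by (simp only: ac)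
    then show ?thesis by (intro exI[of _ "2 * n"]) simp
  qed
  have Cc: "\<exists>j::int. odd j \<and> mu = cos (real_of_int j / real \<tau> * pi)"
    if mu: "mu \<in> eig_support M (unitv x)" and e: "E mu = (\<lambda>u. - \<gamma> * F mu u)" for mu
  proof -
    have ms: "mu \<in> spectrum M" and ne: "E mu \<noteq> (\<lambda>_. 0)" using mu by (auto simp: eig_support_def E_def)
    obtain u where u: "E mu u \<noteq> 0" using nzu[OF ne] by blast
    have "E mu u = - \<gamma> * F mu u" using fun_cong[OF e, of u] by simp
    also have "F mu u = \<gamma> * chb \<tau> mu * E mu u" by (rule key)
    finally have "E mu u = - \<gamma> * (\<gamma> * chb \<tau> mu * E mu u)" .
    then have "E mu u = - chb \<tau> mu * E mu u" using gg by (simp add: mult.assoc[symmetric])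
    then have "E mu u * (chb \<tau> mu + 1) = 0" by (simp add: algebra_simps)
    then have "chb \<tau> mu + 1 = 0" using u by simp
    then have c1: "chb \<tau> mu = -1" by simp
    have r: "-1 \<le> mu" "mu \<le> 1" using bnd[OF ms] by auto
    have "cos (real \<tau> * arccos mu) = -1" using c1 chb_arccos[OF r] by simp
    then obtain n :: int where n: "real \<tau> * arccos mu = real_of_int (2 * n + 1) * pi"
      using cos_eq_m1 by blast
    have ac: "arccos mu = real_of_int (2 * n + 1) / real \<tau> * pi" using n tpos by (simp add: field_simps)
    have "mu = cos (arccos mu)" using r by simp
    then have "mu = cos (real_of_int (2 * n + 1) / real \<tau> * pi)" by (simp only: ac)
    then show ?thesis by (intro exI[of _ "2 * n + 1"]) simp
  qed
  show ?thesis
    unfolding condCg_def Let_def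
  proof (intro conjI ballI impI)
    fix mu assume "mu \<in> spectrum M"
    from A[OF this] show "eigproj M mu (unitv x) = eigproj M mu (unitv y) \<or>
      eigproj M mu (unitv x) = (\<lambda>u. - eigproj M mu (unitv y) u)" unfolding E_def F_def .
  next
    fix mu assume "mu \<in> eig_support M (unitv x)" "eigproj M mu (unitv x) = (\<lambda>u. \<gamma> * eigproj M mu (unitv y) u)"
    then show "\<exists>j::int. even j \<and> mu = cos (real_of_int j / real \<tau> * pi)" using Bc unfolding E_def F_def by blast
  next
    fix mu assume "mu \<in> eig_support M (unitv x)" "eigproj M mu (unitv x) = (\<lambda>u. - \<gamma> * eigproj M mu (unitv y) u)"
    then show "\<exists>j::int. odd j \<and> mu = cos (real_of_int j / real \<tau> * pi)" using Cc unfolding E_def F_def by blast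
  qed
qed

lemma C_imp_B:
  fixes M :: "'a::finite \<Rightarrow> 'a \<Rightarrow> real"
  assumes sym: "symm M" and g: "\<gamma> = 1 \<or> \<gamma> = -1" and tau: "\<tau> \<ge> 1" and C: "condCg M x y \<tau> \<gamma>"
  shows "condBg M x y \<tau> \<gamma>"
proof -
  define E where "E = (\<lambda>mu. eigproj M mu (unitv x))"
  define F where "F = (\<lambda>mu. eigproj M mu (unitv y))"
  have a: "\<And>mu. mu \<in> spectrum M \<Longrightarrow> E mu = F mu \<or> E mu = (\<lambda>u. - F mu u)"
   and b: "\<And>mu. mu \<in> eig_support M (unitv x) \<Longrightarrow> E mu = (\<lambda>u. \<gamma> * F mu u) \<Longrightarrow>
          (\<exists>j::int. even j \<and> mu = cos (real_of_int j / real \<tau> * pi))"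
   and c: "\<And>mu. mu \<in> eig_support M (unitv x) \<Longrightarrow> E mu = (\<lambda>u. - \<gamma> * F mu u) \<Longrightarrow>
          (\<exists>j::int. odd j \<and> mu = cos (real_of_int j / real \<tau> * pi))"
    using C unfolding condCg_def Let_def E_def F_def by blast+
  have tpos: "real \<tau> > 0" using tau by simp
  have chbj: "chb \<tau> (cos (real_of_int j / real \<tau> * pi)) = (if even j then 1 else -1)" for j :: int
  proof -
    have "chb \<tau> (cos (real_of_int j / real \<tau> * pi)) = cos (real \<tau> * (real_of_int j / real \<tau> * pi))"
      by (rule chb_cos)
    also have "real \<tau> * (real_of_int j / real \<tau> * pi) = pi * real_of_int j" using tpos by (simp add: field_simps)
    finally show ?thesis by simp
  qed
  have each: "(\<lambda>u. chb \<tau> mu * E mu u) = (\<lambda>u. \<gamma> * F mu u)" if mu: "mu \<in> spectrum M" for mu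
  proof (cases "E mu = (\<lambda>_. 0)")
    case True
    then have "F mu = (\<lambda>_. 0)" using a[OF mu] by (auto simp: fun_eq_iff)
    then show ?thesis using True by simp
  next
    case False
    then have sup: "mu \<in> eig_support M (unitv x)" using mu by (simp add: eig_support_def E_def)
    have "E mu = (\<lambda>u. \<gamma> * F mu u) \<or> E mu = (\<lambda>u. - \<gamma> * F mu u)"
      using a[OF mu] g by auto
    then show ?thesis
    proof
      assume e: "E mu = (\<lambda>u. \<gamma> * F mu u)"
      obtain j :: int where "even j" "mu = cos (real_of_int j / real \<tau> * pi)" using b[OF sup e] by blast
      then have "chb \<tau> mu = 1" using chbj by simp
      then show ?thesis using e by simp
    next
      assume e: "E mu = (\<lambda>u. - \<gamma> * F mu u)"
      obtain j :: int where "odd j" "mu = cos (real_of_int j / real \<tau> * pi)" using c[OF sup e] by blast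
      then have "chb \<tau> mu = -1" using chbj by simp
      then show ?thesis using e by simp
    qed
  qed
  have "mat_vec (cheb_mat \<tau> M) (unitv x) = (\<lambda>u. \<Sum>mu\<in>spectrum M. eigproj M mu (mat_vec (cheb_mat \<tau> M) (unitv x)) u)"
    by (rule eig_decomp[OF sym])
  also have "\<dots> = (\<lambda>u. \<Sum>mu\<in>spectrum M. chb \<tau> mu * E mu u)"
    by (simp add: eigproj_cheb[OF sym] E_def)
  also have "\<dots> = (\<lambda>u. \<Sum>mu\<in>spectrum M. \<gamma> * F mu u)"
  proof (rule ext, rule sum.cong[OF refl])
    fix u mu assume "mu \<in> spectrum M"
    then show "chb \<tau> mu * E mu u = \<gamma> * F mu u" using each by meson
  qed
  also have "\<dots> = (\<lambda>u. \<gamma> * unitv y u)"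
    using eig_decomp[OF sym, of "unitv y"] by (simp add: F_def sum_distrib_left[symmetric] fun_eq_iff)
  finally show ?thesis by (simp add: condBg_def)
qed

lemma sum_single:
  assumes "finite S" "\<And>a. a \<in> S \<Longrightarrow> a \<noteq> c \<Longrightarrow> f a = 0"
  shows "sum f S = (if c \<in> S then f c else 0)"
proof -
  have "sum f S = (\<Sum>a\<in>S. if a = c then f a else 0)" by (rule sum.cong) (use assms(2) in auto)
  also have "\<dots> = (if c \<in> S then f c else 0)" by (rule sum.delta[OF assms(1)])
  finally show ?thesis .
qed

lemma sum_unitv_r: "(\<Sum>u\<in>UNIV. f u * (unitv x u :: real)) = f (x::'a::finite)"
  by (subst sum_single[where c = x]) (auto simp: unitv_def)
lemma sum_unitv_l: "(\<Sum>u\<in>UNIV. (unitv x u :: real) * f u) = f (x::'a::finite)"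
  by (subst sum_single[where c = x]) (auto simp: unitv_def)
lemma mv_unit: "mat_vec M (unitv x) u = M u x"
  by (simp add: mat_vec_def sum_unitv_r)

lemma sg_sym: "simple_graph E \<Longrightarrow> E u v \<Longrightarrow> E v u"
  by (simp add: simple_graph_def)

lemma sg_sym_iff: "simple_graph E \<Longrightarrow> E u v = E v u"
  by (auto simp: simple_graph_def)

lemma arcs_mem[simp]: "(a \<in> arcs E) = E (fst a) (snd a)"
  by (cases a) (simp add: arcs_def)

lemma finite_arcs[simp]: "finite (arcs (E::'a::finite \<Rightarrow> 'a \<Rightarrow> bool))"
  by simp

lemma deg_pos_iff: "deg E u > 0 \<longleftrightarrow> (\<exists>w. E u w)"
  by (simp add: deg_def card_gt_0_iff)

lemma deg_zero_no: "deg E u = 0 \<Longrightarrow> \<not> E u w"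
  using deg_pos_iff[of E u] by auto

lemma bd_eq: "bd E u a = (if E (fst a) (snd a) \<and> snd a = u then 1 / sqrt (real (deg E u)) else 0)"
  by (simp add: bd_def arc_tgt_def)

lemma sum_arcs:
  "(\<Sum>a\<in>arcs E. f a) = (\<Sum>p\<in>UNIV. \<Sum>q\<in>UNIV. if E p q then f (p, q) else (0::'b::comm_monoid_add))"
  for E :: "'a::finite \<Rightarrow> 'a \<Rightarrow> bool"
proof -
  have "(\<Sum>p\<in>UNIV. \<Sum>q\<in>UNIV. if E p q then f (p, q) else 0) = (\<Sum>(p,q)\<in>UNIV \<times> UNIV. if E p q then f (p, q) else 0)"
    by (rule sum.cartesian_product)
  also have "\<dots> = (\<Sum>a\<in>UNIV. if E (fst a) (snd a) then f a else 0)"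
    unfolding UNIV_Times_UNIV by (rule sum.cong[OF refl]) (auto split: prod.splits)
  also have "\<dots> = (\<Sum>a\<in>{a\<in>UNIV. E (fst a) (snd a)}. f a)"
    by (rule sum.inter_filter[symmetric]) simp
  also have "{a\<in>UNIV. E (fst a) (snd a)} = arcs E" by auto
  finally show ?thesis by simp
qed

lemma deg_sum: "(\<Sum>w\<in>UNIV. if E u w then c else 0) = real (deg E u) * c"
proof -
  have "(\<Sum>w\<in>UNIV. if E u w then c else 0) = (\<Sum>w\<in>{w\<in>UNIV. E u w}. c)"
    by (rule sum.inter_filter[symmetric]) simp
  then show ?thesis by (simp add: deg_def)
qed

lemma discr_eq:
  assumes sg: "simple_graph E"
  shows "discr E u v = (if E u v then 1 / (sqrt (real (deg E u)) * sqrt (real (deg E v))) else 0)"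
proof -
  have inner: "(\<Sum>b\<in>arcs E. bd E u a * shift E a b * bd E v b) = (if a \<in> arcs E then bd E u a * bd E v (arc_inv a) else 0)"
    if "a \<in> arcs E" for a
  proof -
    have ia: "arc_inv a \<in> arcs E" using that sg by (cases a) (auto simp: arc_inv_def simple_graph_def)
    have "(\<Sum>b\<in>arcs E. bd E u a * shift E a b * bd E v b) = (if arc_inv a \<in> arcs E then bd E u a * shift E a (arc_inv a) * bd E v (arc_inv a) else 0)"
      by (rule sum_single) (auto simp: shift_def arc_inv_def)
    then show ?thesis using ia that by (simp add: shift_def arc_inv_def)
  qed
  have "discr E u v = (\<Sum>a\<in>arcs E. bd E u a * bd E v (arc_inv a))"
    unfolding discr_def by (rule sum.cong) (simp_all add: inner)
  also have "\<dots> = (if (v, u) \<in> arcs E then bd E u (v, u) * bd E v (arc_inv (v, u)) else 0)"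
    by (rule sum_single) (auto simp: bd_eq arc_inv_def)
  also have "\<dots> = (if E u v then 1 / (sqrt (real (deg E u)) * sqrt (real (deg E v))) else 0)"
    using sg_sym_iff[OF sg, of u v] by (simp add: bd_eq arc_inv_def)
  finally show ?thesis .
qed

lemma discr_symm: "simple_graph E \<Longrightarrow> symm (discr E)"
  unfolding symm_def by (auto simp: discr_eq sg_sym_iff[of E] mult.commute)

lemma discr_zero_row: "simple_graph E \<Longrightarrow> deg E u = 0 \<Longrightarrow> discr E u w = 0"
  by (simp add: discr_eq deg_zero_no)
lemma discr_zero_col: "simple_graph E \<Longrightarrow> deg E u = 0 \<Longrightarrow> discr E w u = 0"
  using discr_zero_row[of E u w] discr_symm[of E] by (simp add: symm_def)

lemma quad_bound:
  assumes sg: "simple_graph E"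
  shows "\<bar>\<Sum>u\<in>UNIV. v u * mat_vec (discr E) v u\<bar> \<le> (\<Sum>u\<in>UNIV. v u * v u)"
proof -
  define s where "s = (\<lambda>u. sqrt (real (deg E u)))"
  define a where "a = (\<lambda>u. v u / s u)"
  define Q where "Q = (\<Sum>u\<in>UNIV. \<Sum>w\<in>UNIV. if E u w then a u * a w else 0)"
  define R where "R = (\<Sum>u\<in>UNIV. \<Sum>w\<in>UNIV. if E u w then (a u * a u + a w * a w) / 2 else 0)"
  have eQ: "(\<Sum>u\<in>UNIV. v u * mat_vec (discr E) v u) = Q"
    unfolding Q_def mat_vec_def
    by (rule sum.cong[OF refl], simp add: sum_distrib_left, rule sum.cong[OF refl])
       (simp add: discr_eq sg a_def s_def)
  have half: "(\<Sum>u\<in>UNIV. \<Sum>w\<in>UNIV. if E u w then a u * a u else 0) \<le> (\<Sum>u\<in>UNIV. v u * v u)"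
  proof -
    have "(\<Sum>u\<in>UNIV. \<Sum>w\<in>UNIV. if E u w then a u * a u else 0) = (\<Sum>u\<in>UNIV. real (deg E u) * (a u * a u))"
      by (simp add: deg_sum)
    also have "\<dots> \<le> (\<Sum>u\<in>UNIV. v u * v u)"
    proof (rule sum_mono)
      fix u
      show "real (deg E u) * (a u * a u) \<le> v u * v u"
      proof (cases "deg E u = 0")
        case True then show ?thesis by simp
      next
        case False
        then have "s u * s u = real (deg E u)" by (simp add: s_def)
        moreover have "s u > 0" using False by (simp add: s_def)
        ultimately have "real (deg E u) * (a u * a u) = v u * v u" using False by (simp add: a_def field_simps)
        then show ?thesis by simp
      qed
    qed
    finally show ?thesis .
  qed
  have swap: "(\<Sum>u\<in>UNIV. \<Sum>w\<in>UNIV. if E u w then a w * a w else 0) = (\<Sum>u\<in>UNIV. \<Sum>w\<in>UNIV. if E u w then a u * a u else 0)"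
  proof -
    have "(\<Sum>u\<in>UNIV. \<Sum>w\<in>UNIV. if E u w then a w * a w else 0) = (\<Sum>w\<in>UNIV. \<Sum>u\<in>UNIV. if E u w then a w * a w else 0)"
      by (rule sum.swap)
    also have "\<dots> = (\<Sum>w\<in>UNIV. \<Sum>u\<in>UNIV. if E w u then a w * a w else 0)"
      using sg_sym_iff[OF sg] by simp
    finally show ?thesis .
  qed
  have R2: "R \<le> (\<Sum>u\<in>UNIV. v u * v u)"
  proof -
    have "R = ((\<Sum>u\<in>UNIV. \<Sum>w\<in>UNIV. if E u w then a u * a u else 0) + (\<Sum>u\<in>UNIV. \<Sum>w\<in>UNIV. if E u w then a w * a w else 0)) / 2"
    proof -
      have "R = (\<Sum>u\<in>UNIV. \<Sum>w\<in>UNIV. ((if E u w then a u * a u else 0) + (if E u w then a w * a w else 0)) / 2)"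
        unfolding R_def by (intro sum.cong refl) simp
      then show ?thesis by (simp add: sum.distrib sum_divide_distrib add_divide_distrib)
    qed
    then show ?thesis using half swap by simp
  qed
  have "Q \<le> R" unfolding Q_def R_def
  proof (intro sum_mono)
    fix u w
    have "0 \<le> (a u - a w) * (a u - a w)" by simp
    then show "(if E u w then a u * a w else 0) \<le> (if E u w then (a u * a u + a w * a w) / 2 else 0)"
      by (simp add: algebra_simps)
  qed
  moreover have "- Q \<le> R" unfolding Q_def R_def
  proof (simp only: sum_negf[symmetric], intro sum_mono)
    fix u w
    have "0 \<le> (a u + a w) * (a u + a w)" by simp
    then show "- (if E u w then a u * a w else 0) \<le> (if E u w then (a u * a u + a w * a w) / 2 else 0)"
      by (simp add: algebra_simps)
  qed
  ultimately show ?thesis using eQ R2 by simp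
qed

lemma discr_spec_bound:
  assumes sg: "simple_graph E" and mu: "mu \<in> spectrum (discr E)"
  shows "-1 \<le> mu \<and> mu \<le> 1"
proof -
  obtain v where v: "v \<noteq> (\<lambda>_. 0)" "mat_vec (discr E) v = (\<lambda>u. mu * v u)"
    using mu by (auto simp: spectrum_def eigenspace_def)
  define S where "S = (\<Sum>u\<in>UNIV. v u * v u)"
  have "S \<noteq> 0" using sumsq_zero[of v] v(1) by (auto simp: S_def)
  moreover have "S \<ge> 0" by (simp add: S_def sum_nonneg)
  ultimately have Sp: "S > 0" by simp
  have "(\<Sum>u\<in>UNIV. v u * mat_vec (discr E) v u) = mu * S"
    by (simp add: v(2) S_def sum_distrib_left algebra_simps)
  then have "\<bar>mu * S\<bar> \<le> S" using quad_bound[OF sg, of v] by (simp add: S_def)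
  then have "\<bar>mu\<bar> * S \<le> 1 * S" using Sp by (simp add: abs_mult)
  then have "\<bar>mu\<bar> \<le> 1" using Sp by (simp add: mult_le_cancel_right)
  then show ?thesis by auto
qed

lemma cheb_zero_col_aux:
  assumes "\<And>u. M u x = 0"
  shows "\<forall>u. u \<noteq> x \<longrightarrow> cheb_mat n M u x = 0"
proof (induction n rule: nat_less_induct)
  case (1 n)
  show ?case
  proof (intro allI impI)
  fix u assume ux: "u \<noteq> x"
  show "cheb_mat n M u x = 0"
  proof (cases n)
    case 0 then show ?thesis using ux by (simp add: id_mat_def)
  next
    case (Suc m) note m = this
    show ?thesis
    proof (cases m)
      case 0 then show ?thesis using m assms by simp
    next
      case (Suc k)
      have "mat_mult M (cheb_mat (Suc k) M) u x = 0"
        unfolding mat_mult_def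
      proof (rule sum.neutral, rule ballI)
        fix w
        show "M u w * cheb_mat (Suc k) M w x = 0"
          using 1[rule_format, of "Suc k" w] m Suc assms by (cases "w = x") auto
      qed
      moreover have "cheb_mat k M u x = 0" using 1 m Suc ux by simp
      ultimately show ?thesis using m Suc by simp
    qed
  qed
  qed
qed

lemma cheb_zero_col:
  assumes "\<And>u. M u x = 0" "u \<noteq> x" shows "cheb_mat n M u x = 0"
  using cheb_zero_col_aux[of M x n] assms by blast

lemma cheb_zero_row:
  assumes "\<And>w. M y w = 0"
  shows "x \<noteq> y \<Longrightarrow> cheb_mat n M y x = 0"
proof (induction n rule: nat_less_induct)
  case (1 n)
  show ?case
  proof (cases n)
    case 0 then show ?thesis using 1 by (simp add: id_mat_def)
  next
    case (Suc m) note m = this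
    show ?thesis
    proof (cases m)
      case 0 then show ?thesis using m assms by simp
    next
      case (Suc k)
      have "mat_mult M (cheb_mat (Suc k) M) y x = 0"
        unfolding mat_mult_def using assms by simp
      moreover have "cheb_mat k M y x = 0" using 1 m Suc by simp
      ultimately show ?thesis using m Suc by simp
    qed
  qed
qed

lemma col_sum_cheb:
  assumes cs: "\<And>w. (\<Sum>u\<in>UNIV. M u w) = 1"
  shows "(\<Sum>u\<in>UNIV. cheb_mat n M u x) = 1"
proof (induction n rule: nat_less_induct)
  case (1 n)
  show ?case
  proof (cases n)
    case 0 then show ?thesis by (simp add: id_mat_def)
  next
    case (Suc m) note m = this
    show ?thesis
    proof (cases m)
      case 0 then show ?thesis using m cs by simp
    next
      case (Suc k)
      have "(\<Sum>u\<in>UNIV. mat_mult M (cheb_mat (Suc k) M) u x) = (\<Sum>w\<in>UNIV. (\<Sum>u\<in>UNIV. M u w) * cheb_mat (Suc k) M w x)"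
        unfolding mat_mult_def by (simp add: sum_distrib_right) (rule sum.swap)
      also have "\<dots> = 1" using cs 1 m Suc by simp
      finally have a: "(\<Sum>u\<in>UNIV. mat_mult M (cheb_mat (Suc k) M) u x) = 1" .
      have b: "(\<Sum>u\<in>UNIV. cheb_mat k M u x) = 1" using 1 m Suc by simp
      have "(\<Sum>u\<in>UNIV. cheb_mat n M u x) = 2 * (\<Sum>u\<in>UNIV. mat_mult M (cheb_mat (Suc k) M) u x) - (\<Sum>u\<in>UNIV. cheb_mat k M u x)"
        using m Suc by (simp add: sum_subtractf sum_distrib_left)
      then show ?thesis using a b by simp
    qed
  qed
qed

lemma regular_condB:
  fixes E :: "'a::finite \<Rightarrow> 'a \<Rightarrow> bool"
  assumes sg: "simple_graph E" and reg: "regular E" and xy: "x \<noteq> y"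
    and g: "\<gamma> = 1 \<or> \<gamma> = -1" and B: "condB E x y \<tau> \<gamma>"
  shows "\<gamma> = 1"
proof -
  obtain k where k: "\<And>u. deg E u = k" using reg by (auto simp: regular_def)
  have Bu: "cheb_mat \<tau> (discr E) u x = \<gamma> * unitv y u" for u
    using fun_cong[OF B[unfolded condB_def], of u] by (simp add: mv_unit)
  show ?thesis
  proof (cases "k = 0")
    case True
    have "cheb_mat \<tau> (discr E) y x = 0"
      by (rule cheb_zero_col) (use True k sg xy discr_zero_col in auto)
    then show ?thesis using Bu[of y] g by (simp add: unitv_def)
  next
    case False
    have cs: "(\<Sum>u\<in>UNIV. discr E u w) = 1" for w
    proof -
      have "(\<Sum>u\<in>UNIV. discr E u w) = (\<Sum>u\<in>UNIV. if E w u then 1 / real k else 0)"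
        by (rule sum.cong) (auto simp: discr_eq sg k sg_sym_iff[OF sg, of w])
      also have "\<dots> = 1" using False by (simp add: deg_sum k)
      finally show ?thesis .
    qed
    have "(\<Sum>u\<in>UNIV. cheb_mat \<tau> (discr E) u x) = 1" by (rule col_sum_cheb[OF cs])
    moreover have "(\<Sum>u\<in>UNIV. cheb_mat \<tau> (discr E) u x) = \<gamma>"
      by (simp add: Bu sum_distrib_left[symmetric] sum_unitv_l[of y "\<lambda>_. 1", simplified])
    ultimately show ?thesis by simp
  qed
qed

definition dsr :: "('a::finite \<Rightarrow> 'a \<Rightarrow> bool) \<Rightarrow> ('a \<Rightarrow> real) \<Rightarrow> 'a \<times> 'a \<Rightarrow> real" where
  "dsr E g a = (\<Sum>u\<in>UNIV. bd E u a * g u)"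
definition drr :: "('a::finite \<Rightarrow> 'a \<Rightarrow> bool) \<Rightarrow> ('a \<times> 'a \<Rightarrow> real) \<Rightarrow> 'a \<Rightarrow> real" where
  "drr E w u = (\<Sum>a\<in>arcs E. bd E u a * w a)"
definition Urr :: "('a::finite \<Rightarrow> 'a \<Rightarrow> bool) \<Rightarrow> ('a \<times> 'a \<Rightarrow> real) \<Rightarrow> 'a \<times> 'a \<Rightarrow> real" where
  "Urr E w a = (\<Sum>b\<in>arcs E. shift E a b * (2 * dsr E (drr E w) b - w b))"
definition Rsh :: "('a::finite \<Rightarrow> 'a \<Rightarrow> bool) \<Rightarrow> ('a \<times> 'a \<Rightarrow> real) \<Rightarrow> 'a \<times> 'a \<Rightarrow> real" where
  "Rsh E w a = (if a \<in> arcs E then w (arc_inv a) else 0)"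
definition ipa :: "('a::finite \<Rightarrow> 'a \<Rightarrow> bool) \<Rightarrow> ('a \<times> 'a \<Rightarrow> real) \<Rightarrow> ('a \<times> 'a \<Rightarrow> real) \<Rightarrow> real" where
  "ipa E w z = (\<Sum>a\<in>arcs E. w a * z a)"

fun bs :: "('a::finite \<Rightarrow> 'a \<Rightarrow> real) \<Rightarrow> ('a \<Rightarrow> real) \<Rightarrow> nat \<Rightarrow> 'a \<Rightarrow> real" where
  "bs M f 0 = (\<lambda>_. 0)"
| "bs M f (Suc 0) = f"
| "bs M f (Suc (Suc n)) = (\<lambda>u. 2 * mat_vec M (bs M f (Suc n)) u - bs M f n u)"

lemma L_dstar: "dstar E (\<lambda>u. complex_of_real (g u)) = (\<lambda>a. complex_of_real (dsr E g a))"
  by (simp add: dstar_def dsr_def fun_eq_iff)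
lemma L_dmul: "dmul E (\<lambda>a. complex_of_real (w a)) = (\<lambda>u. complex_of_real (drr E w u))"
  by (simp add: dmul_def drr_def fun_eq_iff)
lemma L_evol: "evol E (\<lambda>a. complex_of_real (w a)) = (\<lambda>a. complex_of_real (Urr E w a))"
  by (simp add: evol_def Urr_def L_dmul L_dstar fun_eq_iff)
lemma L_iter: "(evol E ^^ n) (\<lambda>a. complex_of_real (w a)) = (\<lambda>a. complex_of_real ((Urr E ^^ n) w a))"
  by (induction n) (simp_all add: L_evol)
lemma L_unitv: "(unitv x :: 'a \<Rightarrow> complex) = (\<lambda>u. complex_of_real (unitv x u))"
  by (simp add: unitv_def fun_eq_iff)

lemma dsr_eq: "dsr E g a = (if E (fst a) (snd a) then g (snd a) / sqrt (real (deg E (snd a))) else 0)"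
proof -
  have "dsr E g a = (if snd a \<in> UNIV then bd E (snd a) a * g (snd a) else 0)"
    unfolding dsr_def by (rule sum_single) (auto simp: bd_eq)
  then show ?thesis by (simp add: bd_eq)
qed

lemma dsr_pair: "dsr E g (p, q) = (if E p q then g q / sqrt (real (deg E q)) else 0)"
  by (simp add: dsr_eq)

lemma shift_sum:
  assumes sg: "simple_graph E"
  shows "(\<Sum>b\<in>arcs E. shift E a b * h b) = (if a \<in> arcs E then h (arc_inv a) else 0)"
proof -
  have ia: "arc_inv a \<in> arcs E \<longleftrightarrow> a \<in> arcs E" using sg_sym_iff[OF sg] by (simp add: arc_inv_def)
  have "(\<Sum>b\<in>arcs E. shift E a b * h b) = (if arc_inv a \<in> arcs E then shift E a (arc_inv a) * h (arc_inv a) else 0)"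
    by (rule sum_single) (auto simp: shift_def arc_inv_def)
  then show ?thesis using ia by (simp add: shift_def arc_inv_def)
qed

lemma Urr_eq: "simple_graph E \<Longrightarrow> Urr E w = Rsh E (\<lambda>a. 2 * dsr E (drr E w) a - w a)"
  by (simp add: Urr_def Rsh_def shift_sum fun_eq_iff)

lemma Urr_off: "a \<notin> arcs E \<Longrightarrow> Urr E w a = 0"
  by (simp add: Urr_def shift_def)
lemma dsr_off: "a \<notin> arcs E \<Longrightarrow> dsr E g a = 0"
  by (auto simp: dsr_eq)

lemma drr_sum: "drr E w u = (\<Sum>p\<in>UNIV. if E p u then w (p, u) / sqrt (real (deg E u)) else 0)"
proof -
  have "drr E w u = (\<Sum>p\<in>UNIV. \<Sum>q\<in>UNIV. if E p q then bd E u (p, q) * w (p, q) else 0)"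
    unfolding drr_def by (rule sum_arcs)
  also have "\<dots> = (\<Sum>p\<in>UNIV. if E p u then w (p, u) / sqrt (real (deg E u)) else 0)"
  proof (rule sum.cong[OF refl])
    fix p
    have "(\<Sum>q\<in>UNIV. if E p q then bd E u (p, q) * w (p, q) else 0) = (if u \<in> UNIV then (if E p u then bd E u (p, u) * w (p, u) else 0) else 0)"
      by (rule sum_single) (auto simp: bd_eq)
    then show "(\<Sum>q\<in>UNIV. if E p q then bd E u (p, q) * w (p, q) else 0) = (if E p u then w (p, u) / sqrt (real (deg E u)) else 0)"
      by (simp add: bd_eq)
  qed
  finally show ?thesis .
qed

lemma drr_zero: "simple_graph E \<Longrightarrow> deg E u = 0 \<Longrightarrow> drr E w u = 0"
  by (simp add: drr_sum deg_zero_no sg_sym_iff[of E _ u])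

lemma drr_dsr:
  assumes sg: "simple_graph E"
  shows "drr E (dsr E g) u = (if deg E u = 0 then 0 else g u)"
proof (cases "deg E u = 0")
  case True then show ?thesis using drr_zero[OF sg] by simp
next
  case False
  have "drr E (dsr E g) u = (\<Sum>p\<in>UNIV. if E u p then g u / (sqrt (real (deg E u)) * sqrt (real (deg E u))) else 0)"
    unfolding drr_sum
  proof (rule sum.cong[OF refl])
    fix p
    show "(if E p u then dsr E g (p, u) / sqrt (real (deg E u)) else 0) = (if E u p then g u / (sqrt (real (deg E u)) * sqrt (real (deg E u))) else 0)"
      using sg_sym_iff[OF sg, of p u] by (simp add: dsr_pair)
  qed
  also have "\<dots> = g u" using False by (simp add: deg_sum)
  finally show ?thesis using False by simp
qed

lemma drr_Rdsr:
  assumes sg: "simple_graph E"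
  shows "drr E (Rsh E (dsr E g)) u = mat_vec (discr E) g u"
proof -
  have "drr E (Rsh E (dsr E g)) u = (\<Sum>p\<in>UNIV. if E u p then g p / (sqrt (real (deg E u)) * sqrt (real (deg E p))) else 0)"
    unfolding drr_sum
  proof (rule sum.cong[OF refl])
    fix p
    show "(if E p u then Rsh E (dsr E g) (p, u) / sqrt (real (deg E u)) else 0) = (if E u p then g p / (sqrt (real (deg E u)) * sqrt (real (deg E p))) else 0)"
      using sg_sym_iff[OF sg, of p u] by (simp add: Rsh_def arc_inv_def dsr_pair field_simps)
  qed
  also have "\<dots> = mat_vec (discr E) g u"
    unfolding mat_vec_def by (rule sum.cong[OF refl]) (simp add: discr_eq sg)
  finally show ?thesis .
qed

lemma drr_lin: "drr E (\<lambda>a. c * w a - d * z a) u = c * drr E w u - d * drr E z u"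
  by (simp add: drr_def sum_subtractf sum_distrib_left algebra_simps)

lemma bs_N:
  assumes sg: "simple_graph E" and Nf: "\<And>u. deg E u = 0 \<Longrightarrow> f u = 0" and du: "deg E u = 0"
  shows "bs (discr E) f n u = 0"
proof (induction n rule: nat_less_induct)
  case (1 n)
  show ?case
  proof (cases n)
    case 0 then show ?thesis by simp
  next
    case (Suc m) note m = this
    show ?thesis
    proof (cases m)
      case 0 then show ?thesis using m Nf du by simp
    next
      case (Suc k)
      have "mat_vec (discr E) (bs (discr E) f (Suc k)) u = 0"
        by (simp add: mat_vec_def discr_zero_row[OF sg du])
      then show ?thesis using 1 m Suc by simp
    qed
  qed
qed

lemma Ndsr: "simple_graph E \<Longrightarrow> (\<And>u. deg E u = 0 \<Longrightarrow> f u = 0) \<Longrightarrow> drr E (dsr E f) = f"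
  by (auto simp: drr_dsr fun_eq_iff)

lemma walk_inv:
  assumes sg: "simple_graph E" and Nf: "\<And>u. deg E u = 0 \<Longrightarrow> f u = 0"
  shows "(Urr E ^^ Suc n) (dsr E f) = (\<lambda>a. Rsh E (dsr E (bs (discr E) f (Suc n))) a - dsr E (bs (discr E) f n) a)"
proof (induction n)
  case 0
  have d: "drr E (dsr E f) = f" by (rule Ndsr[OF sg Nf])
  have "Urr E (dsr E f) = Rsh E (\<lambda>a. 2 * dsr E f a - dsr E f a)" by (simp only: Urr_eq[OF sg] d)
  also have "(\<lambda>a. 2 * dsr E f a - dsr E f a) = dsr E f" by (simp add: fun_eq_iff)
  finally have "Urr E (dsr E f) = Rsh E (dsr E f)" .
  moreover have "dsr E (\<lambda>_. 0) = (\<lambda>_. 0)" by (simp add: fun_eq_iff dsr_eq)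
  ultimately show ?case by simp
next
  case (Suc n)
  define b0 where "b0 = bs (discr E) f n"
  define b1 where "b1 = bs (discr E) f (Suc n)"
  define phi where "phi = (\<lambda>a. Rsh E (dsr E b1) a - dsr E b0 a)"
  have N0: "\<And>u. deg E u = 0 \<Longrightarrow> b0 u = 0" unfolding b0_def by (rule bs_N[OF sg Nf])
  have dphi: "drr E phi u = mat_vec (discr E) b1 u - b0 u" for u
  proof -
    have "drr E phi u = 1 * drr E (Rsh E (dsr E b1)) u - 1 * drr E (dsr E b0) u"
      unfolding phi_def using drr_lin[of E 1 "Rsh E (dsr E b1)" 1 "dsr E b0" u] by simp
    then show ?thesis by (simp add: drr_Rdsr[OF sg] Ndsr[OF sg N0])
  qed
  have "(Urr E ^^ Suc (Suc n)) (dsr E f) = Urr E phi"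
    using Suc by (simp add: phi_def b0_def b1_def)
  also have "\<dots> = (\<lambda>a. Rsh E (dsr E (bs (discr E) f (Suc (Suc n)))) a - dsr E (bs (discr E) f (Suc n)) a)"
  proof (rule ext)
    fix a :: "'a \<times> 'a"
    obtain p q where a: "a = (p, q)" by (cases a)
    show "Urr E phi a = Rsh E (dsr E (bs (discr E) f (Suc (Suc n)))) a - dsr E (bs (discr E) f (Suc n)) a"
    proof (cases "E p q")
      case False then show ?thesis by (simp add: a Urr_eq[OF sg] Rsh_def dsr_pair)
    next
      case True
      have Eqp: "E q p" using sg_sym[OF sg True] .
      have "Urr E phi a = 2 * dsr E (drr E phi) (q, p) - phi (q, p)"
        by (simp add: a Urr_eq[OF sg] Rsh_def arc_inv_def True)
      also have "\<dots> = 2 * ((mat_vec (discr E) b1 p - b0 p) / sqrt (real (deg E p)))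
            - (b1 q / sqrt (real (deg E q)) - b0 p / sqrt (real (deg E p)))"
      proof -
        have h1: "dsr E (drr E phi) (q, p) = (mat_vec (discr E) b1 p - b0 p) / sqrt (real (deg E p))"
          by (simp add: dsr_pair Eqp dphi)
        have h2: "phi (q, p) = b1 q / sqrt (real (deg E q)) - b0 p / sqrt (real (deg E p))"
          by (simp add: phi_def Rsh_def arc_inv_def dsr_pair True Eqp)
        show ?thesis by (simp only: h1 h2)
      qed
      also have "\<dots> = (2 * mat_vec (discr E) b1 p - b0 p) / sqrt (real (deg E p)) - b1 q / sqrt (real (deg E q))"
        by (simp add: diff_divide_distrib algebra_simps)
      also have "\<dots> = Rsh E (dsr E (bs (discr E) f (Suc (Suc n)))) a - dsr E (bs (discr E) f (Suc n)) a"
        by (simp add: a Rsh_def arc_inv_def dsr_pair True Eqp b0_def b1_def)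
      finally show ?thesis .
    qed
  qed
  finally show ?case .
qed

lemma mat_vec_lin2: "mat_vec M (\<lambda>u. a * g u - h u) = (\<lambda>u. a * mat_vec M g u - mat_vec M h u)"
  by (simp add: mat_vec_def fun_eq_iff sum_subtractf sum_distrib_left algebra_simps)

lemma cheb_bs:
  "mat_vec (cheb_mat (Suc n) M) f = (\<lambda>u. mat_vec M (bs M f (Suc n)) u - bs M f n u)
   \<and> mat_vec (cheb_mat (Suc (Suc n)) M) f = (\<lambda>u. mat_vec M (bs M f (Suc (Suc n))) u - bs M f (Suc n) u)"
proof (induction n)
  case 0
  have "mat_vec (cheb_mat (Suc (Suc 0)) M) f = (\<lambda>u. 2 * mat_vec M (mat_vec M f) u - f u)"
    by (simp only: mat_vec_cheb_SS) (simp add: mat_vec_id)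
  moreover have "mat_vec M (bs M f (Suc (Suc 0))) = (\<lambda>u. 2 * mat_vec M (mat_vec M f) u)"
    using mat_vec_scale[of M 2 "mat_vec M f"] by simp
  ultimately show ?case by simp
next
  case (Suc n)
  have IH1: "mat_vec (cheb_mat (Suc n) M) f = (\<lambda>u. mat_vec M (bs M f (Suc n)) u - bs M f n u)"
    and IH2: "mat_vec (cheb_mat (Suc (Suc n)) M) f = (\<lambda>u. mat_vec M (bs M f (Suc (Suc n))) u - bs M f (Suc n) u)"
    using Suc by blast+
  have e1: "mat_vec (cheb_mat (Suc (Suc (Suc n))) M) f
      = (\<lambda>u. 2 * mat_vec M (mat_vec (cheb_mat (Suc (Suc n)) M) f) u - mat_vec (cheb_mat (Suc n) M) f u)"
    by (rule mat_vec_cheb_SS)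
  have e2: "mat_vec M (\<lambda>u. mat_vec M (bs M f (Suc (Suc n))) u - bs M f (Suc n) u)
     = (\<lambda>u. mat_vec M (mat_vec M (bs M f (Suc (Suc n)))) u - mat_vec M (bs M f (Suc n)) u)"
    by (rule mat_vec_diff)
  have e3: "mat_vec M (bs M f (Suc (Suc (Suc n))))
     = (\<lambda>u. 2 * mat_vec M (mat_vec M (bs M f (Suc (Suc n)))) u - mat_vec M (bs M f (Suc n)) u)"
    by (simp only: bs.simps(3) mat_vec_lin2)
  have e4: "bs M f (Suc (Suc n)) u = 2 * mat_vec M (bs M f (Suc n)) u - bs M f n u" for u
    by simp
  have "mat_vec (cheb_mat (Suc (Suc (Suc n))) M) f = (\<lambda>u. mat_vec M (bs M f (Suc (Suc (Suc n)))) u - bs M f (Suc (Suc n)) u)"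
    unfolding e1 IH2 IH1 e2 e3 fun_eq_iff
    by (simp del: cheb_mat.simps bs.simps add: e4 algebra_simps)
  then show ?case using IH2 by blast
qed

lemma ipa_dsr: "ipa E (dsr E g) w = (\<Sum>u\<in>UNIV. g u * drr E w u)"
proof -
  have "ipa E (dsr E g) w = (\<Sum>a\<in>arcs E. \<Sum>u\<in>UNIV. g u * (bd E u a * w a))"
    unfolding ipa_def dsr_def sum_distrib_right
    by (rule sum.cong[OF refl], rule sum.cong[OF refl]) (simp add: algebra_simps)
  also have "\<dots> = (\<Sum>u\<in>UNIV. \<Sum>a\<in>arcs E. g u * (bd E u a * w a))" by (rule sum.swap)
  also have "\<dots> = (\<Sum>u\<in>UNIV. g u * drr E w u)" by (simp add: drr_def sum_distrib_left)
  finally show ?thesis .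
qed

lemma ipa_Rsh:
  assumes sg: "simple_graph E"
  shows "ipa E (Rsh E w) (Rsh E z) = ipa E w z"
proof -
  have "ipa E (Rsh E w) (Rsh E z) = (\<Sum>p\<in>UNIV. \<Sum>q\<in>UNIV. if E p q then w (q, p) * z (q, p) else 0)"
    unfolding ipa_def sum_arcs by (intro sum.cong refl) (simp add: Rsh_def arc_inv_def)
  also have "\<dots> = (\<Sum>q\<in>UNIV. \<Sum>p\<in>UNIV. if E p q then w (q, p) * z (q, p) else 0)" by (rule sum.swap)
  also have "\<dots> = (\<Sum>q\<in>UNIV. \<Sum>p\<in>UNIV. if E q p then w (q, p) * z (q, p) else 0)"
    using sg_sym_iff[OF sg] by simp
  also have "\<dots> = ipa E w z" unfolding ipa_def sum_arcs ..
  finally show ?thesis .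
qed

lemma ipa_Pi:
  assumes sg: "simple_graph E"
  shows "ipa E (dsr E (drr E w)) (dsr E (drr E w)) = (\<Sum>u\<in>UNIV. drr E w u * drr E w u)"
proof -
  have "drr E (dsr E (drr E w)) = drr E w"
    by (rule Ndsr[OF sg]) (rule drr_zero[OF sg])
  then show ?thesis by (simp add: ipa_dsr)
qed

lemma Urr_norm:
  assumes sg: "simple_graph E"
  shows "ipa E (Urr E w) (Urr E w) = ipa E w w"
proof -
  define p where "p = dsr E (drr E w)"
  have "ipa E (Urr E w) (Urr E w) = ipa E (\<lambda>a. 2 * p a - w a) (\<lambda>a. 2 * p a - w a)"
    by (simp add: Urr_eq[OF sg] ipa_Rsh[OF sg] p_def)
  also have "\<dots> = 4 * ipa E p p - 4 * ipa E p w + ipa E w w"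
  proof -
    have "\<And>a. (2 * p a - w a) * (2 * p a - w a) = 4 * (p a * p a) - 4 * (p a * w a) + w a * w a"
      by (simp add: algebra_simps)
    then show ?thesis by (simp add: ipa_def sum.distrib sum_subtractf sum_distrib_left)
  qed
  also have "ipa E p p = ipa E p w"
  proof -
    have "ipa E p p = (\<Sum>u\<in>UNIV. drr E w u * drr E w u)" unfolding p_def by (rule ipa_Pi[OF sg])
    moreover have "ipa E p w = (\<Sum>u\<in>UNIV. drr E w u * drr E w u)" unfolding p_def by (rule ipa_dsr)
    ultimately show ?thesis by simp
  qed
  finally show ?thesis by simp
qed

lemma iter_norm: "simple_graph E \<Longrightarrow> ipa E ((Urr E ^^ n) w) ((Urr E ^^ n) w) = ipa E w w"
  by (induction n) (simp_all add: Urr_norm)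

lemma Urr_zero: "Urr E (\<lambda>_. 0) = (\<lambda>_. 0)"
  by (simp add: Urr_def drr_def dsr_def fun_eq_iff)

lemma iter_zero: "(Urr E ^^ n) (\<lambda>_. 0) = (\<lambda>_. 0)"
  by (induction n) (simp_all add: Urr_zero)

lemma dsr_unit_zero:
  assumes sg: "simple_graph E" and d: "deg E x = 0"
  shows "dsr E (unitv x) = (\<lambda>_. 0)"
proof (rule ext)
  fix a :: "'a \<times> 'a"
  obtain p q where a: "a = (p, q)" by (cases a)
  show "dsr E (unitv x) a = 0"
  proof (cases "q = x")
    case True
    have "\<not> E p q" using True deg_zero_no[OF d, of p] sg_sym_iff[OF sg, of p x] by simp
    then show ?thesis by (simp add: a dsr_pair)
  next
    case False then show ?thesis by (simp add: a dsr_pair unitv_def)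
  qed
qed

lemma N_unit: "deg E x \<noteq> 0 \<Longrightarrow> deg E u = 0 \<Longrightarrow> (unitv x u :: real) = 0"
  by (auto simp: unitv_def)

lemma PST_iff_B:
  fixes E :: "'a::finite \<Rightarrow> 'a \<Rightarrow> bool"
  assumes sg: "simple_graph E" and xy: "x \<noteq> y" and tau: "\<tau> \<ge> 1"
  shows "PST E (dstar E (unitv x)) (dstar E (unitv y)) \<tau> \<longleftrightarrow> (\<exists>\<gamma>\<in>{1, -1}. condB E x y \<tau> \<gamma>)"
proof -
  define ex :: "'a \<Rightarrow> real" where "ex = unitv x"
  define ey :: "'a \<Rightarrow> real" where "ey = unitv y"
  define Phi where "Phi = dsr E ex"
  define Psi where "Psi = dsr E ey"
  define phi where "phi = (Urr E ^^ \<tau>) Phi"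
  have conv: "PST E (dstar E (unitv x)) (dstar E (unitv y)) \<tau> \<longleftrightarrow>
     (\<lambda>a. complex_of_real (Phi a)) \<noteq> (\<lambda>a. complex_of_real (Psi a)) \<and>
     (\<exists>\<gamma>::complex. cmod \<gamma> = 1 \<and> (\<lambda>a. complex_of_real (phi a)) = (\<lambda>a. \<gamma> * complex_of_real (Psi a)))"
    unfolding PST_def L_unitv[of x] L_unitv[of y] L_dstar L_iter
    by (simp add: Phi_def Psi_def phi_def ex_def ey_def)
  obtain n where n: "\<tau> = Suc n" using tau by (cases \<tau>) auto
  have Bcol: "condB E x y \<tau> \<gamma> \<longleftrightarrow> (\<forall>u. cheb_mat \<tau> (discr E) u x = \<gamma> * ey u)" for \<gamma>
    by (simp add: condB_def fun_eq_iff mv_unit ey_def)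
  show ?thesis
  proof (cases "deg E x = 0")
    case True
    have Phi0: "Phi = (\<lambda>_. 0)" using dsr_unit_zero[OF sg True] by (simp add: Phi_def ex_def)
    have phi0: "phi = (\<lambda>_. 0)" by (simp add: phi_def Phi0 iter_zero)
    have nP: "\<not> PST E (dstar E (unitv x)) (dstar E (unitv y)) \<tau>"
    proof
      assume "PST E (dstar E (unitv x)) (dstar E (unitv y)) \<tau>"
      then obtain \<gamma> :: complex where g: "cmod \<gamma> = 1" and e: "(\<lambda>a. complex_of_real (phi a)) = (\<lambda>a. \<gamma> * complex_of_real (Psi a))"
        and ne: "(\<lambda>a. complex_of_real (Phi a)) \<noteq> (\<lambda>a. complex_of_real (Psi a))"
        using conv by blast
      have "\<gamma> \<noteq> 0" using g by auto
      then have "Psi a = 0" for a using fun_cong[OF e, of a] by (simp add: phi0)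
      then show False using ne by (simp add: Phi0)
    qed
    have nB: "\<not> condB E x y \<tau> \<gamma>" if "\<gamma> \<in> {1, -1}" for \<gamma>
    proof
      assume "condB E x y \<tau> \<gamma>"
      then have "cheb_mat \<tau> (discr E) y x = \<gamma> * ey y" using Bcol by blast
      moreover have "cheb_mat \<tau> (discr E) y x = 0"
        by (rule cheb_zero_col) (use discr_zero_col[OF sg True] xy in auto)
      ultimately show False using that by (auto simp: ey_def unitv_def)
    qed
    show ?thesis using nP nB by blast
  next
    case False
    have Nx: "\<And>u. deg E u = 0 \<Longrightarrow> ex u = 0" using False by (auto simp: ex_def unitv_def)
    have dphi: "drr E phi = mat_vec (cheb_mat \<tau> (discr E)) ex"
    proof (rule ext)
      fix u
      define b0 where "b0 = bs (discr E) ex n"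
      define b1 where "b1 = bs (discr E) ex (Suc n)"
      have N0: "\<And>u. deg E u = 0 \<Longrightarrow> b0 u = 0" unfolding b0_def by (rule bs_N[OF sg Nx])
      have "phi = (\<lambda>a. Rsh E (dsr E b1) a - dsr E b0 a)"
        unfolding phi_def Phi_def n b0_def b1_def by (rule walk_inv[OF sg Nx])
      then have "drr E phi u = 1 * drr E (Rsh E (dsr E b1)) u - 1 * drr E (dsr E b0) u"
        using drr_lin[of E 1 "Rsh E (dsr E b1)" 1 "dsr E b0" u] by simp
      also have "\<dots> = mat_vec (discr E) b1 u - b0 u" by (simp add: drr_Rdsr[OF sg] Ndsr[OF sg N0])
      also have "\<dots> = mat_vec (cheb_mat \<tau> (discr E)) ex u"
        using cheb_bs[of n "discr E" ex] by (simp add: n b0_def b1_def)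
      finally show "drr E phi u = mat_vec (cheb_mat \<tau> (discr E)) ex u" .
    qed
    have nphi: "ipa E phi phi = 1"
    proof -
      have "ipa E phi phi = ipa E Phi Phi" unfolding phi_def by (rule iter_norm[OF sg])
      also have "\<dots> = (\<Sum>u\<in>UNIV. ex u * drr E (dsr E ex) u)" by (simp add: Phi_def ipa_dsr)
      also have "\<dots> = 1" by (simp only: Ndsr[OF sg Nx]) (simp add: ex_def unitv_sq)
      finally show ?thesis .
    qed
    have phi_off: "a \<notin> arcs E \<Longrightarrow> phi a = 0" for a
      by (simp add: phi_def n Urr_off)
    show ?thesis
    proof
      assume "PST E (dstar E (unitv x)) (dstar E (unitv y)) \<tau>"
      then obtain \<gamma> :: complex where g: "cmod \<gamma> = 1" and e: "(\<lambda>a. complex_of_real (phi a)) = (\<lambda>a. \<gamma> * complex_of_real (Psi a))"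
        using conv by blast
      have ea: "complex_of_real (phi a) = \<gamma> * complex_of_real (Psi a)" for a using fun_cong[OF e, of a] by simp
      have dy: "deg E y \<noteq> 0"
      proof
        assume dy0: "deg E y = 0"
        have "Psi = (\<lambda>_. 0)" using dsr_unit_zero[OF sg dy0] by (simp add: Psi_def ey_def)
        then have "phi a = 0" for a using ea[of a] by simp
        then have "phi = (\<lambda>_. 0)" by (simp add: fun_eq_iff)
        then show False using nphi by (simp add: ipa_def)
      qed
      obtain p where p: "E y p" using dy deg_pos_iff[of E y] by auto
      have Epy: "E p y" using sg_sym[OF sg p] .
      have Psi0: "Psi (p, y) \<noteq> 0" using dy by (simp add: Psi_def dsr_pair Epy ey_def unitv_def)
      define g where "g = phi (p, y) / Psi (p, y)"
      have gam: "\<gamma> = complex_of_real g"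
        using ea[of "(p, y)"] Psi0 by (simp add: g_def field_simps)
      have phig: "phi a = g * Psi a" for a
        using ea[of a] by (simp add: gam flip: of_real_mult)
      have gg: "g = 1 \<or> g = -1" using g by (simp add: gam abs_if split: if_splits)
      have Ny: "\<And>u. deg E u = 0 \<Longrightarrow> ey u = 0" using dy by (auto simp: ey_def unitv_def)
      have "drr E phi u = g * ey u" for u
      proof -
        have "drr E phi u = g * drr E Psi u"
          by (simp add: phig drr_def sum_distrib_left mult.left_commute)
        also have "drr E Psi = ey" unfolding Psi_def by (rule Ndsr[OF sg Ny])
        finally show ?thesis .
      qed
      then have "condB E x y \<tau> g" using dphi by (simp add: condB_def ex_def ey_def fun_eq_iff)
      then show "\<exists>\<gamma>\<in>{1, -1}. condB E x y \<tau> \<gamma>" using gg by auto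
    next
      assume "\<exists>\<gamma>\<in>{1, -1}. condB E x y \<tau> \<gamma>"
      then obtain g where gg: "g = 1 \<or> g = -1" and B: "condB E x y \<tau> g" by auto
      have col: "cheb_mat \<tau> (discr E) u x = g * ey u" for u using B Bcol by blast
      have dy: "deg E y \<noteq> 0"
      proof
        assume dy0: "deg E y = 0"
        have "cheb_mat \<tau> (discr E) y x = 0"
          by (rule cheb_zero_row) (use discr_zero_row[OF sg dy0] xy in auto)
        then show False using col[of y] gg by (auto simp: ey_def unitv_def)
      qed
      have Ny: "\<And>u. deg E u = 0 \<Longrightarrow> ey u = 0" using dy by (auto simp: ey_def unitv_def)
      have dphi2: "drr E phi = (\<lambda>u. g * ey u)"
        using dphi col by (simp add: fun_eq_iff mat_vec_def ex_def sum_unitv_r)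
      define q where "q = dsr E (drr E phi)"
      have qeq: "q a = g * Psi a" for a by (simp add: q_def dphi2 Psi_def dsr_eq)
      have sq1: "(\<Sum>u\<in>UNIV. drr E phi u * drr E phi u) = 1"
      proof -
        have "(\<Sum>u\<in>UNIV. drr E phi u * drr E phi u) = (\<Sum>u\<in>UNIV. (g * g) * (ey u * ey u))"
          by (simp add: dphi2 algebra_simps)
        also have "\<dots> = 1" using gg by (auto simp: sum_distrib_left[symmetric] ey_def unitv_sq)
        finally show ?thesis .
      qed
      have qq: "ipa E q q = 1" unfolding q_def using ipa_Pi[OF sg, of phi] sq1 by simp
      have qp: "ipa E q phi = 1" unfolding q_def using ipa_dsr[of E "drr E phi" phi] sq1 by simp
      have "ipa E (\<lambda>a. phi a - q a) (\<lambda>a. phi a - q a) = ipa E phi phi - 2 * ipa E q phi + ipa E q q"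
      proof -
        have "\<And>a. (phi a - q a) * (phi a - q a) = phi a * phi a - 2 * (q a * phi a) + q a * q a"
          by (simp add: algebra_simps)
        then show ?thesis by (simp add: ipa_def sum.distrib sum_subtractf sum_distrib_left)
      qed
      then have z: "(\<Sum>a\<in>arcs E. (phi a - q a) * (phi a - q a)) = 0"
        using nphi qq qp by (simp add: ipa_def)
      have "\<forall>a\<in>arcs E. (phi a - q a) * (phi a - q a) = 0"
        using sum_nonneg_eq_0_iff[of "arcs E" "\<lambda>a. (phi a - q a) * (phi a - q a)"] z by simp
      then have phiq: "a \<in> arcs E \<Longrightarrow> phi a = g * Psi a" for a using qeq[of a] by auto
      have phig: "phi a = g * Psi a" for a
      proof (cases "a \<in> arcs E")
        case True then show ?thesis by (rule phiq)
      next
        case False then show ?thesis using phi_off[OF False] dsr_off[OF False] by (simp add: Psi_def)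
      qed
      obtain p where p: "E x p" using False deg_pos_iff[of E x] by auto
      have Epx: "E p x" using sg_sym[OF sg p] .
      have "Phi (p, x) \<noteq> Psi (p, x)"
        using False xy by (simp add: Phi_def Psi_def dsr_pair Epx ex_def ey_def unitv_def)
      then have ne: "(\<lambda>a. complex_of_real (Phi a)) \<noteq> (\<lambda>a. complex_of_real (Psi a))"
        by (metis of_real_eq_iff)
      have "cmod (complex_of_real g) = 1" using gg by auto
      moreover have "(\<lambda>a. complex_of_real (phi a)) = (\<lambda>a. complex_of_real g * complex_of_real (Psi a))"
        by (simp add: phig)
      ultimately show "PST E (dstar E (unitv x)) (dstar E (unitv y)) \<tau>"
        using conv ne by blast
    qed
  qed
qed

theorem theorem6p5:
  fixes E :: "'a::finite \<Rightarrow> 'a \<Rightarrow> bool" and x y :: 'a and \<tau> :: nat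
  assumes "simple_graph E" and "x \<noteq> y" and "\<tau> \<ge> 1"
  shows "(PST E (dstar E (unitv x)) (dstar E (unitv y)) \<tau> \<longleftrightarrow>
            (\<exists>\<gamma>\<in>{1, -1}. condB E x y \<tau> \<gamma>))
       \<and> (PST E (dstar E (unitv x)) (dstar E (unitv y)) \<tau> \<longleftrightarrow>
            (\<exists>\<gamma>\<in>{1, -1}. condC E x y \<tau> \<gamma>))
       \<and> (regular E \<longrightarrow>
            (\<forall>\<gamma>\<in>{1, -1}. condB E x y \<tau> \<gamma> \<longrightarrow> \<gamma> = 1) \<and>
            (\<forall>\<gamma>\<in>{1, -1}. condC E x y \<tau> \<gamma> \<longrightarrow> \<gamma> = 1))"
proof -
  note sg = assms(1) and xy = assms(2) and tau = assms(3)
  have sym: "symm (discr E)" by (rule discr_symm[OF sg])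
  have bnd: "\<And>mu. mu \<in> spectrum (discr E) \<Longrightarrow> -1 \<le> mu \<and> mu \<le> 1"
    by (rule discr_spec_bound[OF sg])
  have BC: "condB E x y \<tau> \<gamma> \<longleftrightarrow> condC E x y \<tau> \<gamma>" if "\<gamma> \<in> {1, -1}" for \<gamma> :: real
  proof -
    have g: "\<gamma> = 1 \<or> \<gamma> = -1" using that by auto
    show ?thesis unfolding condB_g condC_g
      using B_imp_C[OF sym bnd g tau] C_imp_B[OF sym g tau] by blast
  qed
  have P1: "PST E (dstar E (unitv x)) (dstar E (unitv y)) \<tau> \<longleftrightarrow> (\<exists>\<gamma>\<in>{1, -1}. condB E x y \<tau> \<gamma>)"
    by (rule PST_iff_B[OF sg xy tau])
  have P2: "(\<exists>\<gamma>\<in>{1, -1}. condB E x y \<tau> \<gamma>) \<longleftrightarrow> (\<exists>\<gamma>\<in>{1, -1}. condC E x y \<tau> \<gamma>)"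
    using BC by blast
  have P3: "regular E \<longrightarrow>
            (\<forall>\<gamma>\<in>{1, -1}. condB E x y \<tau> \<gamma> \<longrightarrow> \<gamma> = 1) \<and>
            (\<forall>\<gamma>\<in>{1, -1}. condC E x y \<tau> \<gamma> \<longrightarrow> \<gamma> = 1)"
  proof (intro impI conjI ballI)
    fix \<gamma> :: real assume reg: "regular E" and g: "\<gamma> \<in> {1, -1}" and B: "condB E x y \<tau> \<gamma>"
    have g': "\<gamma> = 1 \<or> \<gamma> = -1" using g by auto
    show "\<gamma> = 1" using regular_condB[OF sg reg xy g' B] .
  next
    fix \<gamma> :: real assume reg: "regular E" and g: "\<gamma> \<in> {1, -1}" and C: "condC E x y \<tau> \<gamma>"
    have g': "\<gamma> = 1 \<or> \<gamma> = -1" using g by auto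
    have B: "condB E x y \<tau> \<gamma>" using BC[OF g] C by blast
    show "\<gamma> = 1" using regular_condB[OF sg reg xy g' B] .
  qed
  show ?thesis using P1 P2 P3 by blast
qed


end
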